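(* Let $\Gamma>0$. There exist $\alpha>0$, $h_0>0$ and $C>0$ such that for all $h\in(0,h_0)$ and every eigenpair $(\lambda,\psi)$ of $\mathcal L_{\mathsf{Gui}}(h)$ with $|\lambda-\frac18|\le\Gamma h^{2/3}$, $$\int_{\Omega\cap\{x\ge0\}}e^{\alpha h^{-1}x}\big(|\psi|^2+|h\,\partial_x\psi|^2\big)\,dx\,dy\le C\|\psi\|^2.$$
   Context: Let $\Omega=\{(x,y)\in\mathbb R^2: y>0,\ x<y<x+\pi\sqrt2\}$, $N=\{(x,0):-\pi\sqrt2<x<0\}\subset\partial\Omega$, and $H^1_{\mathsf{Mix}}(\Omega)=\{\psi\in H^1(\Omega):\psi=0\text{ on }\partial\Omega\setminus N\}$. For $h>0$, $\mathcal L_{\mathsf{Gui}}(h)=-h^2\partial_x^2-\partial_y^2$ is the self-adjoint operator associated with the form $\int_\Omega(h^2|\partial_x\psi|^2+|\partial_y\psi|^2)$ on $H^1_{\mathsf{Mix}}(\Omega)$ (Neumann on $N$, Dirichlet elsewhere). $\|\cdot\|$ is the $L^2(\Omega)$ norm. *)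

theory Defs
  imports "HOL-Analysis.Analysis"
begin

definition OmegaGui :: "(real \<times> real) set" where
  "OmegaGui = {(x, y). 0 < y \<and> x < y \<and> y < x + pi * sqrt 2}"

definition NeuGui :: "(real \<times> real) set" where
  "NeuGui = {(x, y). y = 0 \<and> - (pi * sqrt 2) < x \<and> x < 0}"

definition csupp :: "(real \<times> real \<Rightarrow> complex) \<Rightarrow> (real \<times> real) set" where
  "csupp f = closure {z. f z \<noteq> 0}"

definition C1c :: "(real \<times> real \<Rightarrow> complex) \<Rightarrow> bool" where
  "C1c f \<longleftrightarrow> compact (csupp f) \<and>
     (\<exists>dx dy. continuous_on UNIV dx \<and> continuous_on UNIV dy \<and>
        (\<forall>z. (f has_derivative (\<lambda>(u, v). of_real u * dx z + of_real v * dy z)) (at z)))"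

definition pdx :: "(real \<times> real \<Rightarrow> complex) \<Rightarrow> real \<times> real \<Rightarrow> complex" where
  "pdx f z = frechet_derivative f (at z) (1, 0)"

definition pdy :: "(real \<times> real \<Rightarrow> complex) \<Rightarrow> real \<times> real \<Rightarrow> complex" where
  "pdy f z = frechet_derivative f (at z) (0, 1)"

definition L2on :: "(real \<times> real) set \<Rightarrow> (real \<times> real \<Rightarrow> complex) \<Rightarrow> bool" where
  "L2on U f \<longleftrightarrow> set_borel_measurable lborel U f \<and>
     set_integrable lborel U (\<lambda>z. (cmod (f z))\<^sup>2)"

definition weak_dx :: "(real \<times> real) set \<Rightarrow> (real \<times> real \<Rightarrow> complex) \<Rightarrow> (real \<times> real \<Rightarrow> complex) \<Rightarrow> bool" where
  "weak_dx U f g \<longleftrightarrow> (\<forall>\<phi>. C1c \<phi> \<and> csupp \<phi> \<subseteq> U \<longrightarrow>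
      (LINT z:U|lborel. f z * pdx \<phi> z) = - (LINT z:U|lborel. g z * \<phi> z))"

definition weak_dy :: "(real \<times> real) set \<Rightarrow> (real \<times> real \<Rightarrow> complex) \<Rightarrow> (real \<times> real \<Rightarrow> complex) \<Rightarrow> bool" where
  "weak_dy U f g \<longleftrightarrow> (\<forall>\<phi>. C1c \<phi> \<and> csupp \<phi> \<subseteq> U \<longrightarrow>
      (LINT z:U|lborel. f z * pdy \<phi> z) = - (LINT z:U|lborel. g z * \<phi> z))"

definition H1on :: "(real \<times> real) set \<Rightarrow> (real \<times> real \<Rightarrow> complex) \<Rightarrow> (real \<times> real \<Rightarrow> complex)
    \<Rightarrow> (real \<times> real \<Rightarrow> complex) \<Rightarrow> bool" where
  "H1on U f gx gy \<longleftrightarrow> L2on U f \<and> L2on U gx \<and> L2on U gy \<and> weak_dx U f gx \<and> weak_dy U f gy"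

text \<open>H^1_Mix(Omega): the closure, in the H^1(Omega) norm, of (restrictions of) C^1 compactly
  supported functions whose support does not meet the Dirichlet part of the boundary
  (the boundary minus N). This is the set of H^1 functions with vanishing trace on
  the boundary minus N.\<close>
definition H1Mix :: "(real \<times> real \<Rightarrow> complex) \<Rightarrow> (real \<times> real \<Rightarrow> complex)
    \<Rightarrow> (real \<times> real \<Rightarrow> complex) \<Rightarrow> bool" where
  "H1Mix f gx gy \<longleftrightarrow> H1on OmegaGui f gx gy \<and>
     (\<exists>\<phi> :: nat \<Rightarrow> real \<times> real \<Rightarrow> complex.
        (\<forall>n. C1c (\<phi> n) \<and> csupp (\<phi> n) \<inter> (frontier OmegaGui - NeuGui) = {}) \<and>
        (\<lambda>n. LINT z:OmegaGui|lborel. (cmod (\<phi> n z - f z))\<^sup>2 + (cmod (pdx (\<phi> n) z - gx z))\<^sup>2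
                                     + (cmod (pdy (\<phi> n) z - gy z))\<^sup>2) \<longlonglongrightarrow> 0)"

text \<open>(lam, f) is an eigenpair of L_Gui(h), the self-adjoint operator associated with the
  form q(f,g) = int h^2 d_x f conj(d_x g) + d_y f conj(d_y g) on H^1_Mix: f lies in the form
  domain (with weak gradient (gx, gy)), is nonzero in L^2, and q(f, g) = lam <f, g> for all g
  in the form domain.\<close>
definition gui_eigenpair :: "real \<Rightarrow> real \<Rightarrow> (real \<times> real \<Rightarrow> complex) \<Rightarrow> (real \<times> real \<Rightarrow> complex)
    \<Rightarrow> (real \<times> real \<Rightarrow> complex) \<Rightarrow> bool" where
  "gui_eigenpair h lam f gx gy \<longleftrightarrow> H1Mix f gx gy \<and>
     \<not> (AE z in lborel. z \<in> OmegaGui \<longrightarrow> f z = 0) \<and>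
     (\<forall>g g1 g2. H1Mix g g1 g2 \<longrightarrow>
        (LINT z:OmegaGui|lborel. of_real (h\<^sup>2) * gx z * cnj (g1 z) + gy z * cnj (g2 z))
          = of_real lam * (LINT z:OmegaGui|lborel. f z * cnj (g z)))"

end

theory Submission
  imports Defs
begin
lemma cos_half_pos:
  fixes a b y :: real
  assumes "b - a \<le> pi * sqrt 2" "a \<le> y" "y \<le> b"
  shows "cos ((y - (a+b)/2)/2) > 0"
proof -
  have "sqrt 2 < sqrt 4" by (simp only: real_sqrt_less_iff)
  hence s: "sqrt 2 < 2" by simp
  have "pi * sqrt 2 < pi * 2" using s pi_gt_zero by simp
  hence "b - a < pi * 2" using assms by linarith
  have l1: "y - (a+b)/2 < pi" using assms \<open>b - a < pi * 2\<close> by (simp add: field_simps)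
  have l2: "-(y - (a+b)/2) < pi" using assms \<open>b - a < pi * 2\<close> by (simp add: field_simps)
  from l1 l2
  show ?thesis using l1 l2 by (intro cos_gt_zero_pi) (simp_all add: field_simps)
qed

lemma poinc1d:
  fixes u u' :: "real \<Rightarrow> complex" and a b :: real
  assumes ab: "a \<le> b" "b - a \<le> pi * sqrt 2"
    and der: "\<And>y. (u has_vector_derivative u' y) (at y)"
    and cu': "continuous_on UNIV u'"
    and ua: "u a = 0" and ub: "u b = 0"
  shows "(1/4) * integral {a..b} (\<lambda>y. (cmod (u y))\<^sup>2) \<le> integral {a..b} (\<lambda>y. (cmod (u' y))\<^sup>2)"
proof -
  define m where "m = (a+b)/2"
  define F where "F y = tan ((y - m)/2) / 2" for y
  define p where "p y = Re (u y)" for y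
  define q where "q y = Im (u y)" for y
  define p' where "p' y = Re (u' y)" for y
  define q' where "q' y = Im (u' y)" for y
  define G where "G y = F y * ((p y)\<^sup>2 + (q y)\<^sup>2)" for y
  define G' where "G' y = (1/4 + (F y)\<^sup>2) * ((p y)\<^sup>2 + (q y)\<^sup>2) + F y * (2 * p y * p' y + 2 * q y * q' y)" for y
  have cpos: "cos ((y - m)/2) > 0" if "y \<in> {a..b}" for y
    using cos_half_pos[OF ab(2)] that unfolding m_def by auto
  have dp: "(p has_real_derivative p' y) (at y)" for y
  proof -
    have "((\<lambda>y. Re (u y)) has_real_derivative Re (u' y)) (at y)"
      using der[of y] by (rule has_field_derivative_Re)
    thus ?thesis by (simp add: p_def[abs_def] p'_def)
  qed
  have dq: "(q has_real_derivative q' y) (at y)" for y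
  proof -
    have "((\<lambda>y. Im (u y)) has_real_derivative Im (u' y)) (at y)"
      using der[of y] by (rule has_field_derivative_Im)
    thus ?thesis by (simp add: q_def[abs_def] q'_def)
  qed
  have dF: "(F has_real_derivative (1/4 + (F y)\<^sup>2)) (at y)" if "y \<in> {a..b}" for y
  proof -
    have c: "cos ((y - m)/2) \<noteq> 0" using cpos[OF that] by simp
    have "(F has_real_derivative (inverse ((cos ((y - m)/2))\<^sup>2) * (1/2) / 2)) (at y)"
      unfolding F_def[abs_def]
      by (auto intro!: derivative_eq_intros c)
    moreover have "inverse ((cos ((y - m)/2))\<^sup>2) * (1/2) / 2 = 1/4 + (F y)\<^sup>2"
      using c by (simp add: F_def tan_def field_simps power2_eq_square sin_squared_eq)
    ultimately show ?thesis by metis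
  qed
  have dG: "(G has_real_derivative G' y) (at y)" if "y \<in> {a..b}" for y
    unfolding G_def[abs_def] G'_def
    by (rule derivative_eq_intros dF[OF that] dp dq refl | simp)+
  have FTC: "(G' has_integral (G b - G a)) {a..b}"
  proof (rule fundamental_theorem_of_calculus[OF ab(1)])
    fix y assume "y \<in> {a..b}"
    from has_field_derivative_at_within[OF dG[OF this]]
    show "(G has_vector_derivative G' y) (at y within {a..b})"
      by (simp add: has_real_derivative_iff_has_vector_derivative)
  qed
  have Gab: "G b - G a = 0" using ua ub by (simp add: G_def p_def q_def)
  have cmu: "(cmod (u y))\<^sup>2 = (p y)\<^sup>2 + (q y)\<^sup>2" for y
    by (simp add: p_def q_def cmod_power2)
  have cmu': "(cmod (u' y))\<^sup>2 = (p' y)\<^sup>2 + (q' y)\<^sup>2" for y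
    by (simp add: p'_def q'_def cmod_power2)
  have pw: "(1/4) * (cmod (u y))\<^sup>2 - G' y \<le> (cmod (u' y))\<^sup>2" for y
  proof -
    have "0 \<le> (p' y + F y * p y)\<^sup>2 + (q' y + F y * q y)\<^sup>2" by simp
    thus ?thesis unfolding cmu cmu' G'_def by (simp add: algebra_simps power2_eq_square)
  qed
  have cu: "continuous_on UNIV u"
    using der by (meson continuous_at_imp_continuous_on has_vector_derivative_continuous)
  have i1: "(\<lambda>y. (cmod (u y))\<^sup>2) integrable_on {a..b}"
    by (intro integrable_continuous_interval continuous_intros continuous_on_subset[OF cu]) auto
  have i2: "(\<lambda>y. (cmod (u' y))\<^sup>2) integrable_on {a..b}"
    by (intro integrable_continuous_interval continuous_intros continuous_on_subset[OF cu']) auto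
  have "integral {a..b} (\<lambda>y. (1/4) * (cmod (u y))\<^sup>2 - G' y) \<le> integral {a..b} (\<lambda>y. (cmod (u' y))\<^sup>2)"
    using i1 FTC i2 pw by (intro integral_le) (auto intro!: integrable_diff)
  moreover have "integral {a..b} (\<lambda>y. (1/4) * (cmod (u y))\<^sup>2 - G' y) = (1/4) * integral {a..b} (\<lambda>y. (cmod (u y))\<^sup>2)"
  proof -
    have iG: "G' integrable_on {a..b}" using FTC by blast
    have "integral {a..b} (\<lambda>y. (1/4) * (cmod (u y))\<^sup>2 - G' y) = integral {a..b} (\<lambda>y. (1/4) * (cmod (u y))\<^sup>2) - integral {a..b} G'"
      by (rule integral_diff) (use i1 iG in auto)
    also have "integral {a..b} G' = 0" using FTC Gab integral_unique by auto
    finally show ?thesis by simp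
  qed
  ultimately show ?thesis by simp
qed

lemma Omega_open: "open OmegaGui"
proof -
  have e: "OmegaGui = {z. 0 < snd z} \<inter> {z. fst z < snd z} \<inter> {z. snd z < fst z + pi * sqrt 2}"
    by (auto simp: OmegaGui_def)
  have o: "open {z::real\<times>real. 0 < snd z}" "open {z::real\<times>real. fst z < snd z}"
     "open {z::real\<times>real. snd z < fst z + pi * sqrt 2}"
    by (intro open_Collect_less continuous_intros)+
  show ?thesis unfolding e by (intro open_Int o)
qed

lemma Omega_sets[measurable]: "OmegaGui \<in> sets lborel"
  unfolding sets_lborel by (rule borel_open[OF Omega_open])

lemma C1c_pd:
  assumes "C1c \<phi>"
  shows "continuous_on UNIV (pdx \<phi>)" "continuous_on UNIV (pdy \<phi>)"
    "\<And>z. (\<phi> has_derivative (\<lambda>(u, v). of_real u * pdx \<phi> z + of_real v * pdy \<phi> z)) (at z)"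
proof -
  obtain dx dy where c: "continuous_on UNIV dx" "continuous_on UNIV dy"
    and d: "\<And>z. (\<phi> has_derivative (\<lambda>(u, v). of_real u * dx z + of_real v * dy z)) (at z)"
    using assms unfolding C1c_def by blast
  have fr: "frechet_derivative \<phi> (at z) = (\<lambda>(u, v). of_real u * dx z + of_real v * dy z)" for z
    using frechet_derivative_at[OF d[of z]] by simp
  have ex: "pdx \<phi> = dx" unfolding pdx_def fr by (rule ext) simp
  have ey: "pdy \<phi> = dy" unfolding pdy_def fr by (rule ext) simp
  show "continuous_on UNIV (pdx \<phi>)" unfolding ex by (rule c)
  show "continuous_on UNIV (pdy \<phi>)" unfolding ey by (rule c)
  show "\<And>z. (\<phi> has_derivative (\<lambda>(u, v). of_real u * pdx \<phi> z + of_real v * pdy \<phi> z)) (at z)"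
    unfolding ex ey by (rule d)
qed

lemma C1c_cont: "C1c \<phi> \<Longrightarrow> continuous_on UNIV \<phi>"
proof -
  assume a: "C1c \<phi>"
  show ?thesis
  proof (rule continuous_at_imp_continuous_on, rule ballI)
    fix z :: "real \<times> real"
    show "isCont \<phi> z" by (rule has_derivative_continuous[OF C1c_pd(3)[OF a]])
  qed
qed

lemma csupp_zero: "z \<notin> csupp f \<Longrightarrow> f z = 0"
proof (rule ccontr)
  assume a: "z \<notin> csupp f" and b: "f z \<noteq> 0"
  have "z \<in> {z. f z \<noteq> 0}" using b by simp
  hence "z \<in> csupp f" unfolding csupp_def by (rule subsetD[OF closure_subset])
  with a show False by contradiction
qed

lemma C1c_pd_zero:
  assumes "C1c \<phi>" "z \<notin> csupp \<phi>"
  shows "pdx \<phi> z = 0" "pdy \<phi> z = 0"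
proof -
  have "((\<lambda>_. 0) has_derivative (\<lambda>_. 0)) (at z)" by simp
  hence "(\<phi> has_derivative (\<lambda>_. 0)) (at z)"
  proof (rule has_derivative_transform_within_open[where s = "- csupp \<phi>"])
    show "open (- csupp \<phi>)" unfolding csupp_def by (rule open_Compl) (rule closed_closure)
    show "z \<in> - csupp \<phi>" using assms(2) by simp
    fix x assume "x \<in> - csupp \<phi>"
    hence "x \<notin> csupp \<phi>" by simp
    hence "\<phi> x = 0" by (rule csupp_zero)
    thus "0 = \<phi> x" by (rule sym)
  qed
  hence "frechet_derivative \<phi> (at z) = (\<lambda>_. 0)" by (rule frechet_derivative_at[symmetric])
  thus "pdx \<phi> z = 0" "pdy \<phi> z = 0" by (auto simp: pdx_def pdy_def)
qed

definition MO :: "(real \<times> real) measure" where "MO = restrict_space lborel OmegaGui"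

lemma Omega_borel[measurable, simp]: "OmegaGui \<in> sets borel"
  using Omega_open by (rule borel_open)

lemma Om_sp: "OmegaGui \<inter> space lborel \<in> sets lborel" using Omega_sets by simp

lemma sets_MO[simp, measurable_cong]: "sets MO = sets (restrict_space lborel OmegaGui)" by (simp add: MO_def)
lemma space_MO[simp]: "space MO = OmegaGui" by (simp add: MO_def space_restrict_space)

lemma meas_MO_iff: "(f :: real \<times> real \<Rightarrow> 'b::real_normed_vector) \<in> borel_measurable MO \<longleftrightarrow> set_borel_measurable lborel OmegaGui f"
  unfolding MO_def set_borel_measurable_def
  by (rule borel_measurable_restrict_space_iff[OF Om_sp])

lemma int_MO_iff: "integrable MO (f :: real \<times> real \<Rightarrow> 'b::{banach, second_countable_topology}) \<longleftrightarrow> set_integrable lborel OmegaGui f"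
  unfolding MO_def set_integrable_def
  by (rule integrable_restrict_space[OF Om_sp])

lemma integral_MO: "(LINT z:OmegaGui|lborel. f z) = integral\<^sup>L MO (f :: real \<times> real \<Rightarrow> 'b::{banach, second_countable_topology})"
  unfolding MO_def set_lebesgue_integral_def
  by (rule integral_restrict_space[OF Om_sp, symmetric])

lemma nn_integral_MO: "(\<integral>\<^sup>+ z. f z \<partial>MO) = (\<integral>\<^sup>+ z. f z * indicator OmegaGui z \<partial>lborel)"
  unfolding MO_def by (rule nn_integral_restrict_space[OF Om_sp])

lemma meas_MO_cont: "continuous_on UNIV f \<Longrightarrow> f \<in> borel_measurable MO"
  unfolding MO_def
  by (rule measurable_restrict_space1) (simp add: borel_measurable_continuous_onI)

definition L2 :: "(real \<times> real \<Rightarrow> complex) \<Rightarrow> bool" where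
  "L2 f \<longleftrightarrow> f \<in> borel_measurable MO \<and> integrable MO (\<lambda>z. (cmod (f z))\<^sup>2)"

lemma L2on_iff: "L2on OmegaGui f \<longleftrightarrow> L2 f"
  unfolding L2on_def L2_def meas_MO_iff int_MO_iff ..

lemma meas_of_real: "b \<in> borel_measurable M \<Longrightarrow> (\<lambda>z. complex_of_real (b z)) \<in> borel_measurable M"
  using measurable_compose[OF _ borel_measurable_of_real] by blast

lemma meas_cnj: "f \<in> borel_measurable M \<Longrightarrow> (\<lambda>z. cnj (f z)) \<in> borel_measurable M"
proof -
  have "(cnj :: complex \<Rightarrow> complex) \<in> borel_measurable borel"
    by (rule borel_measurable_continuous_onI) (intro continuous_intros)
  moreover assume "f \<in> borel_measurable M"
  ultimately show ?thesis using measurable_compose by blast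
qed

lemma L2_meas: "L2 f \<Longrightarrow> f \<in> borel_measurable MO" by (simp add: L2_def)
lemma L2_int: "L2 f \<Longrightarrow> integrable MO (\<lambda>z. (cmod (f z))\<^sup>2)" by (simp add: L2_def)

lemma L2_prod:
  assumes "L2 f" "L2 g"
  shows "integrable MO (\<lambda>z. f z * g z)"
proof (rule Bochner_Integration.integrable_bound[where f="\<lambda>z. ((cmod (f z))\<^sup>2 + (cmod (g z))\<^sup>2) / 2"])
  show "integrable MO (\<lambda>z. ((cmod (f z))\<^sup>2 + (cmod (g z))\<^sup>2) / 2)"
    using assms by (intro integrable_divide Bochner_Integration.integrable_add) (auto simp: L2_def)
  show "(\<lambda>z. f z * g z) \<in> borel_measurable MO" using assms by (intro borel_measurable_times) (simp_all add: L2_def)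
  show "AE z in MO. norm (f z * g z) \<le> norm (((cmod (f z))\<^sup>2 + (cmod (g z))\<^sup>2) / 2)"
  proof (rule AE_I2)
    fix z
    have "2 * (cmod (f z) * cmod (g z)) \<le> (cmod (f z))\<^sup>2 + (cmod (g z))\<^sup>2"
      using sum_squares_bound[of "cmod (f z)" "cmod (g z)"] by (simp add: power2_eq_square)
    thus "norm (f z * g z) \<le> norm (((cmod (f z))\<^sup>2 + (cmod (g z))\<^sup>2) / 2)"
      by (simp add: norm_mult)
  qed
qed

lemma L2_prod_real:
  assumes "L2 f" "L2 g"
  shows "integrable MO (\<lambda>z. cmod (f z) * cmod (g z))"
proof -
  have "integrable MO (\<lambda>z. cmod (f z * g z))" using L2_prod[OF assms] by (rule integrable_norm)
  thus ?thesis by (simp add: norm_mult)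
qed

lemma L2_cnj: "L2 f \<Longrightarrow> L2 (\<lambda>z. cnj (f z))"
  unfolding L2_def by (auto intro: meas_cnj)

lemma L2_add: 
  assumes "L2 f" "L2 g" shows "L2 (\<lambda>z. f z + g z)"
  unfolding L2_def
proof
  show m: "(\<lambda>z. f z + g z) \<in> borel_measurable MO" using assms by (intro borel_measurable_add) (simp_all add: L2_def)
  show "integrable MO (\<lambda>z. (cmod (f z + g z))\<^sup>2)"
  proof (rule Bochner_Integration.integrable_bound)
    show "integrable MO (\<lambda>z. 2 * (cmod (f z))\<^sup>2 + 2 * (cmod (g z))\<^sup>2)"
      using assms by (intro Bochner_Integration.integrable_add integrable_mult_right) (auto simp: L2_def)
    show "(\<lambda>z. (cmod (f z + g z))\<^sup>2) \<in> borel_measurable MO" using m by simp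
    show "AE z in MO. norm ((cmod (f z + g z))\<^sup>2) \<le> norm (2 * (cmod (f z))\<^sup>2 + 2 * (cmod (g z))\<^sup>2)"
    proof (rule AE_I2)
      fix z
      have t: "cmod (f z + g z) \<le> cmod (f z) + cmod (g z)" by (rule norm_triangle_ineq)
      have "(cmod (f z + g z))\<^sup>2 \<le> (cmod (f z) + cmod (g z))\<^sup>2"
        using t by (intro power_mono) auto
      also have "\<dots> \<le> 2 * (cmod (f z))\<^sup>2 + 2 * (cmod (g z))\<^sup>2"
        using sum_squares_bound[of "cmod (f z)" "cmod (g z)"] by (simp add: power2_eq_square algebra_simps)
      finally show "norm ((cmod (f z + g z))\<^sup>2) \<le> norm (2 * (cmod (f z))\<^sup>2 + 2 * (cmod (g z))\<^sup>2)"
        by simp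
    qed
  qed
qed

lemma L2_scale:
  assumes "L2 f" "b \<in> borel_measurable MO" "\<And>z. \<bar>b z\<bar> \<le> B"
  shows "L2 (\<lambda>z. of_real (b z) * f z)"
  unfolding L2_def
proof
  show m: "(\<lambda>z. of_real (b z) * f z) \<in> borel_measurable MO" using assms by (intro borel_measurable_times meas_of_real) (simp_all add: L2_def)
  show "integrable MO (\<lambda>z. (cmod (of_real (b z) * f z))\<^sup>2)"
  proof (rule Bochner_Integration.integrable_bound)
    show "integrable MO (\<lambda>z. B\<^sup>2 * (cmod (f z))\<^sup>2)"
      using assms by (intro integrable_mult_right) (auto simp: L2_def)
    show "(\<lambda>z. (cmod (of_real (b z) * f z))\<^sup>2) \<in> borel_measurable MO" using m by simp
    show "AE z in MO. norm ((cmod (of_real (b z) * f z))\<^sup>2) \<le> norm (B\<^sup>2 * (cmod (f z))\<^sup>2)"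
    proof (rule AE_I2)
      fix z
      have "\<bar>b z\<bar>\<^sup>2 \<le> B\<^sup>2" using assms(3)[of z] by (intro power_mono) auto
      hence "\<bar>b z\<bar>\<^sup>2 * (cmod (f z))\<^sup>2 \<le> B\<^sup>2 * (cmod (f z))\<^sup>2" by (intro mult_right_mono) auto
      thus "norm ((cmod (of_real (b z) * f z))\<^sup>2) \<le> norm (B\<^sup>2 * (cmod (f z))\<^sup>2)"
        by (simp add: norm_mult power_mult_distrib)
    qed
  qed
qed

lemma L2_cmult: "L2 f \<Longrightarrow> L2 (\<lambda>z. c * f z)"
  unfolding L2_def by (auto simp: norm_mult power_mult_distrib)

lemma L2_minus: "L2 f \<Longrightarrow> L2 (\<lambda>z. - f z)"
  unfolding L2_def by auto

lemma L2_diff: "L2 f \<Longrightarrow> L2 g \<Longrightarrow> L2 (\<lambda>z. f z - g z)"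
  using L2_add[of f "\<lambda>z. - g z"] L2_minus[of g] by simp

lemma L2_contc:
  assumes "continuous_on UNIV f" "compact K" "\<And>z. z \<notin> K \<Longrightarrow> f z = 0"
  shows "L2 f"
proof -
  obtain B where B: "\<And>z. z \<in> K \<Longrightarrow> cmod (f z) \<le> B"
    using compact_imp_bounded[OF compact_continuous_image[OF continuous_on_subset[OF assms(1)] assms(2)]]
    unfolding bounded_iff by auto
  have fin: "emeasure lborel K < \<infinity>"
    by (rule emeasure_bounded_finite[OF compact_imp_bounded[OF assms(2)]])
  have Kc: "K \<in> sets lborel" using assms(2) by (simp add: compact_imp_closed)
  have ik: "integrable lborel (\<lambda>z. B\<^sup>2 * indicator K z :: real)"
    using fin Kc by (intro integrable_mult_right integrable_real_indicator) auto
  have ikMO: "integrable MO (\<lambda>z. B\<^sup>2 * indicator K z :: real)"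
    unfolding MO_def using ik by (intro integrable_restrict_space[THEN iffD2, OF Om_sp] integrable_mult_indicator) auto
  show ?thesis unfolding L2_def
  proof
    show m: "f \<in> borel_measurable MO" by (rule meas_MO_cont[OF assms(1)])
    show "integrable MO (\<lambda>z. (cmod (f z))\<^sup>2)"
    proof (rule Bochner_Integration.integrable_bound[OF ikMO])
      show "(\<lambda>z. (cmod (f z))\<^sup>2) \<in> borel_measurable MO" using m by simp
      show "AE z in MO. norm ((cmod (f z))\<^sup>2) \<le> norm (B\<^sup>2 * indicator K z :: real)"
      proof (rule AE_I2)
        fix z show "norm ((cmod (f z))\<^sup>2) \<le> norm (B\<^sup>2 * indicator K z :: real)"
        proof (cases "z \<in> K")
          case True
          have "(cmod (f z))\<^sup>2 \<le> B\<^sup>2" using B[OF True] by (intro power_mono) auto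
          thus ?thesis using True by simp
        next
          case False thus ?thesis using assms(3) by simp
        qed
      qed
    qed
  qed
qed

lemma C1c_L2:
  assumes "C1c \<phi>"
  shows "L2 \<phi>" "L2 (pdx \<phi>)" "L2 (pdy \<phi>)"
proof -
  have K: "compact (csupp \<phi>)" using assms by (simp add: C1c_def)
  show "L2 \<phi>" by (rule L2_contc[OF C1c_cont[OF assms] K csupp_zero[of _ \<phi>]])
  show "L2 (pdx \<phi>)" by (rule L2_contc[OF C1c_pd(1)[OF assms] K C1c_pd_zero(1)[OF assms]])
  show "L2 (pdy \<phi>)" by (rule L2_contc[OF C1c_pd(2)[OF assms] K C1c_pd_zero(2)[OF assms]])
qed

abbreviation LL :: real where "LL \<equiv> pi * sqrt 2"

lemma LL_pos: "LL > 0" by simp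

lemma bdry_low:
  assumes "0 \<le> x"
  shows "(x, x) \<in> frontier OmegaGui - NeuGui"
proof -
  have "(x, x) \<in> closure OmegaGui"
    unfolding closure_approachable
  proof (intro allI impI)
    fix e :: real assume e: "e > 0"
    define t where "t = min (e/2) (LL/2)"
    have t1: "t \<le> LL/2" by (simp add: t_def)
    have t2: "0 < t" "t < e" using e by (auto simp: t_def)
    have t3: "t < LL" using t1 LL_pos by linarith
    note t = t2 t3
    have "(x, x + t) \<in> OmegaGui" using t assms by (auto simp: OmegaGui_def)
    moreover have "dist (x, x + t) (x, x) < e" using t by (simp add: dist_Pair_Pair dist_real_def)
    ultimately show "\<exists>y\<in>OmegaGui. dist y (x, x) < e" by blast
  qed
  moreover have "(x, x) \<notin> interior OmegaGui"
    using interior_subset[of OmegaGui] by (auto simp: OmegaGui_def)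
  moreover have "(x, x) \<notin> NeuGui" using assms by (simp add: NeuGui_def)
  ultimately show ?thesis by (simp add: frontier_def)
qed

lemma bdry_up:
  assumes "0 \<le> x"
  shows "(x, x + LL) \<in> frontier OmegaGui - NeuGui"
proof -
  have "(x, x + LL) \<in> closure OmegaGui"
    unfolding closure_approachable
  proof (intro allI impI)
    fix e :: real assume e: "e > 0"
    define t where "t = min (e/2) (LL/2)"
    have t1: "t \<le> LL/2" by (simp add: t_def)
    have t2: "0 < t" "t < e" using e by (auto simp: t_def)
    have t3: "t < LL" using t1 LL_pos by linarith
    note t = t2 t3
    have "(x, x + LL - t) \<in> OmegaGui" using t assms by (auto simp: OmegaGui_def)
    moreover have "dist (x, x + LL - t) (x, x + LL) < e" using t by (simp add: dist_Pair_Pair dist_real_def)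
    ultimately show "\<exists>y\<in>OmegaGui. dist y (x, x + LL) < e" by blast
  qed
  moreover have "(x, x + LL) \<notin> interior OmegaGui"
    using interior_subset[of OmegaGui] by (auto simp: OmegaGui_def)
  moreover have "(x, x + LL) \<notin> NeuGui" using assms by (simp add: NeuGui_def)
  ultimately show ?thesis by (simp add: frontier_def)
qed

lemma slice_ineq:
  assumes \<phi>: "C1c \<phi>" and D: "csupp \<phi> \<inter> (frontier OmegaGui - NeuGui) = {}" and x: "0 \<le> x"
  shows "integral {x..x+LL} (\<lambda>y. (cmod (\<phi> (x, y)))\<^sup>2) \<le> 4 * integral {x..x+LL} (\<lambda>y. (cmod (pdy \<phi> (x, y)))\<^sup>2)"
proof -
  have der: "((\<lambda>y. \<phi> (x, y)) has_vector_derivative pdy \<phi> (x, y)) (at y)" for y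
  proof -
    have d1: "((\<lambda>y. (x, y)) has_derivative (\<lambda>t. (0, t))) (at y)"
      by (auto intro!: derivative_eq_intros)
    have "((\<lambda>y. \<phi> (x, y)) has_derivative (\<lambda>t. (\<lambda>(u, v). of_real u * pdx \<phi> (x,y) + of_real v * pdy \<phi> (x,y)) (0, t))) (at y)"
      by (rule has_derivative_compose[OF d1 C1c_pd(3)[OF \<phi>]])
    thus ?thesis by (simp add: has_vector_derivative_def scaleR_conv_of_real mult.commute)
  qed
  have cu': "continuous_on UNIV (\<lambda>y. pdy \<phi> (x, y))"
    by (rule continuous_on_compose2[OF C1c_pd(2)[OF \<phi>]]) (auto intro!: continuous_intros)
  have z1: "\<phi> (x, x) = 0" using D bdry_low[OF x] by (intro csupp_zero) blast
  have z2: "\<phi> (x, x + LL) = 0" using D bdry_up[OF x] by (intro csupp_zero) blast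
  have "(1/4) * integral {x..x+LL} (\<lambda>y. (cmod (\<phi> (x, y)))\<^sup>2) \<le> integral {x..x+LL} (\<lambda>y. (cmod (pdy \<phi> (x, y)))\<^sup>2)"
    by (rule poinc1d[OF _ _ der cu' z1 z2]) auto
  thus ?thesis by simp
qed

definition PP :: "(real \<times> real) set" where "PP = OmegaGui \<inter> {z. 0 \<le> fst z}"

lemma PP_borel[measurable]: "PP \<in> sets borel"
proof -
  have "{z::real\<times>real. 0 \<le> fst z} \<in> sets borel"
    by (rule borel_closed) (intro closed_Collect_le continuous_intros)
  thus ?thesis unfolding PP_def by (intro sets.Int) auto
qed

lemma PP_slice: "0 \<le> x \<Longrightarrow> indicator PP (x, y) = (indicator {x<..<x+LL} y :: 'a::zero_neq_one)"
  by (auto simp: PP_def OmegaGui_def indicator_def)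

lemma PP_slice_neg: "x < 0 \<Longrightarrow> indicator PP (x, y) = (0 :: 'a::zero_neq_one)"
  by (auto simp: PP_def indicator_def)

lemma fubini_nn:
  assumes "F \<in> borel_measurable (lborel :: (real \<times> real) measure)"
  shows "integral\<^sup>N lborel F = (\<integral>\<^sup>+ x. \<integral>\<^sup>+ y. F (x, y) \<partial>lborel \<partial>lborel)"
proof -
  have "F \<in> borel_measurable (lborel \<Otimes>\<^sub>M lborel)" using assms by (simp add: lborel_prod)
  from lborel.nn_integral_fst[OF this] show ?thesis by (simp add: lborel_prod)
qed

lemma slice_nn:
  assumes c: "continuous_on UNIV g" and x: "0 \<le> x" and c0: "0 \<le> c"
  shows "(\<integral>\<^sup>+ y. ennreal (c * (cmod (g (x, y)))\<^sup>2) * indicator PP (x, y) \<partial>lborel)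
       = ennreal (c * integral {x..x+LL} (\<lambda>y. (cmod (g (x, y)))\<^sup>2))"
proof -
  have cg: "continuous_on UNIV (\<lambda>y. g (x, y))"
    by (rule continuous_on_compose2[OF c]) (auto intro!: continuous_intros)
  have "(\<lambda>y. (cmod (g (x, y)))\<^sup>2) integrable_on {x..x+LL}"
    by (intro integrable_continuous_interval continuous_intros continuous_on_subset[OF cg]) auto
  hence "((\<lambda>y. c * (cmod (g (x, y)))\<^sup>2) has_integral (c * integral {x..x+LL} (\<lambda>y. (cmod (g (x, y)))\<^sup>2))) {x..x+LL}"
    by (intro has_integral_mult_right integrable_integral)
  hence hi: "((\<lambda>y. c * (cmod (g (x, y)))\<^sup>2) has_integral (c * integral {x..x+LL} (\<lambda>y. (cmod (g (x, y)))\<^sup>2))) {x<..<x+LL}"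
    unfolding has_integral_open_interval[of _ _ x "x+LL", unfolded box_real cbox_interval] .
  have "(\<integral>\<^sup>+ y. ennreal (c * (cmod (g (x, y)))\<^sup>2) * indicator {x<..<x+LL} y \<partial>lborel)
       = ennreal (c * integral {x..x+LL} (\<lambda>y. (cmod (g (x, y)))\<^sup>2))"
    by (rule nn_integral_has_integral_lebesgue'[OF _ hi]) (use c0 in auto)
  thus ?thesis using PP_slice[OF x, where 'a=ennreal] by simp
qed

lemma poinc_nn:
  assumes \<phi>: "C1c \<phi>" and D: "csupp \<phi> \<inter> (frontier OmegaGui - NeuGui) = {}"
    and w: "w \<in> borel_measurable borel" "\<And>x. 0 \<le> w x"
  shows "(\<integral>\<^sup>+ z. ennreal (w (fst z) * (cmod (\<phi> z))\<^sup>2) * indicator PP z \<partial>lborel)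
    \<le> 4 * (\<integral>\<^sup>+ z. ennreal (w (fst z) * (cmod (pdy \<phi> z))\<^sup>2) * indicator PP z \<partial>lborel)"
proof -
  have [measurable]: "\<phi> \<in> borel_measurable borel" 
    by (rule borel_measurable_continuous_onI[OF C1c_cont[OF \<phi>]])
  have [measurable]: "pdy \<phi> \<in> borel_measurable borel" 
    by (rule borel_measurable_continuous_onI[OF C1c_pd(2)[OF \<phi>]])
  have fm: "(fst :: real \<times> real \<Rightarrow> real) \<in> borel_measurable borel"
    by (rule borel_measurable_continuous_onI) (intro continuous_intros)
  have [measurable]: "(\<lambda>z::real\<times>real. w (fst z)) \<in> borel_measurable borel"
    using measurable_compose[OF fm w(1)] by (simp add: comp_def)
  define F1 where "F1 z = ennreal (w (fst z) * (cmod (\<phi> z))\<^sup>2) * indicator PP z" for z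
  define F2 where "F2 z = ennreal (w (fst z) * (cmod (pdy \<phi> z))\<^sup>2) * indicator PP z" for z
  have m1: "F1 \<in> borel_measurable lborel" unfolding F1_def measurable_lborel2 by measurable
  have m2: "F2 \<in> borel_measurable lborel" unfolding F2_def measurable_lborel2 by measurable
  have "integral\<^sup>N lborel F1 = (\<integral>\<^sup>+ x. \<integral>\<^sup>+ y. F1 (x, y) \<partial>lborel \<partial>lborel)"
    by (rule fubini_nn[OF m1])
  also have "\<dots> \<le> (\<integral>\<^sup>+ x. \<integral>\<^sup>+ y. 4 * F2 (x, y) \<partial>lborel \<partial>lborel)"
  proof (rule nn_integral_mono)
    fix x :: real
    show "(\<integral>\<^sup>+ y. F1 (x, y) \<partial>lborel) \<le> (\<integral>\<^sup>+ y. 4 * F2 (x, y) \<partial>lborel)"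
    proof (cases "0 \<le> x")
      case False
      hence "\<And>y. F1 (x, y) = 0" unfolding F1_def using PP_slice_neg[of x _, where 'a=ennreal] by simp
      thus ?thesis by simp
    next
      case True
      have e1: "(\<integral>\<^sup>+ y. F1 (x, y) \<partial>lborel) = ennreal (w x * integral {x..x+LL} (\<lambda>y. (cmod (\<phi> (x, y)))\<^sup>2))"
        unfolding F1_def using slice_nn[OF C1c_cont[OF \<phi>] True w(2)] by simp
      have "(\<integral>\<^sup>+ y. 4 * F2 (x, y) \<partial>lborel) = (\<integral>\<^sup>+ y. ennreal ((4 * w x) * (cmod (pdy \<phi> (x, y)))\<^sup>2) * indicator PP (x, y) \<partial>lborel)"
        unfolding F2_def by (intro nn_integral_cong) (simp add: ennreal_mult' mult.assoc)
      also have "\<dots> = ennreal ((4 * w x) * integral {x..x+LL} (\<lambda>y. (cmod (pdy \<phi> (x, y)))\<^sup>2))"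
        using slice_nn[OF C1c_pd(2)[OF \<phi>] True] w(2)[of x] by simp
      finally have e2: "(\<integral>\<^sup>+ y. 4 * F2 (x, y) \<partial>lborel) = ennreal (w x * (4 * integral {x..x+LL} (\<lambda>y. (cmod (pdy \<phi> (x, y)))\<^sup>2)))"
        by (simp add: mult.assoc mult.left_commute)
      have "w x * integral {x..x+LL} (\<lambda>y. (cmod (\<phi> (x, y)))\<^sup>2) \<le> w x * (4 * integral {x..x+LL} (\<lambda>y. (cmod (pdy \<phi> (x, y)))\<^sup>2))"
        by (rule mult_left_mono[OF slice_ineq[OF \<phi> D True] w(2)])
      thus ?thesis unfolding e1 e2 by (rule ennreal_leI)
    qed
  qed
  also have "\<dots> = integral\<^sup>N lborel (\<lambda>z. 4 * F2 z)"
    by (rule fubini_nn[symmetric]) (use m2 in measurable)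
  also have "\<dots> = 4 * integral\<^sup>N lborel F2"
    by (rule nn_integral_cmult[OF m2])
  finally show ?thesis unfolding F1_def F2_def .
qed

locale weight =
  fixes E E' :: "real \<Rightarrow> real" and B :: real
  assumes dE: "\<And>x. (E has_real_derivative E' x) (at x)"
    and cE': "continuous_on UNIV E'"
    and bE: "\<And>x. \<bar>E x\<bar> \<le> B" and bE': "\<And>x. \<bar>E' x\<bar> \<le> B"
begin

lemma cE: "continuous_on UNIV E"
  using dE by (meson DERIV_isCont continuous_at_imp_continuous_on)

definition W :: "(real \<times> real \<Rightarrow> complex) \<Rightarrow> real \<times> real \<Rightarrow> complex" where
  "W f z = of_real (E (fst z)) * f z"

lemma W_deriv:
  assumes "C1c \<phi>"
  shows "(W \<phi> has_derivative (\<lambda>(u, v). of_real u * (of_real (E (fst z)) * pdx \<phi> z + of_real (E' (fst z)) * \<phi> z)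
             + of_real v * (of_real (E (fst z)) * pdy \<phi> z))) (at z)"
proof -
  have d1: "(E has_derivative (\<lambda>t. E' (fst z) * t)) (at (fst z))"
    using dE[of "fst z"] by (simp add: has_field_derivative_def)
  have d2: "((\<lambda>z. E (fst z)) has_derivative (\<lambda>h. E' (fst z) * fst h)) (at z)"
    by (rule has_derivative_compose[OF has_derivative_fst[OF has_derivative_ident] d1])
  have d3: "((\<lambda>z. complex_of_real (E (fst z))) has_derivative (\<lambda>h. complex_of_real (E' (fst z) * fst h))) (at z)"
    by (rule has_derivative_of_real[OF d2])
  have d4: "((\<lambda>z. complex_of_real (E (fst z)) * \<phi> z) has_derivative
      (\<lambda>h. complex_of_real (E (fst z)) * (\<lambda>(u, v). of_real u * pdx \<phi> z + of_real v * pdy \<phi> z) h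
          + complex_of_real (E' (fst z) * fst h) * \<phi> z)) (at z)"
    by (rule has_derivative_mult[OF d3 C1c_pd(3)[OF assms]])
  have eq: "(\<lambda>h. complex_of_real (E (fst z)) * (\<lambda>(u, v). of_real u * pdx \<phi> z + of_real v * pdy \<phi> z) h
          + complex_of_real (E' (fst z) * fst h) * \<phi> z) =
      (\<lambda>(u, v). of_real u * (of_real (E (fst z)) * pdx \<phi> z + of_real (E' (fst z)) * \<phi> z)
             + of_real v * (of_real (E (fst z)) * pdy \<phi> z))"
    by (rule ext) (auto simp: algebra_simps split: prod.splits)
  show ?thesis using d4 unfolding eq W_def[abs_def] .
qed

lemma W_csupp: "csupp (W \<phi>) \<subseteq> csupp \<phi>"
  unfolding csupp_def W_def by (rule closure_mono) auto

lemma W_C1c: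
  assumes "C1c \<phi>"
  shows "C1c (W \<phi>)" "pdx (W \<phi>) z = of_real (E (fst z)) * pdx \<phi> z + of_real (E' (fst z)) * \<phi> z"
    "pdy (W \<phi>) z = of_real (E (fst z)) * pdy \<phi> z"
proof -
  have cp: "compact (csupp \<phi>)" using assms by (simp add: C1c_def)
  have "compact (csupp \<phi> \<inter> csupp (W \<phi>))"
    by (rule compact_Int_closed[OF cp]) (simp add: csupp_def)
  moreover have "csupp \<phi> \<inter> csupp (W \<phi>) = csupp (W \<phi>)" using W_csupp by blast
  ultimately have c1: "compact (csupp (W \<phi>))" by simp
  have cx: "continuous_on UNIV (\<lambda>z. of_real (E (fst z)) * pdx \<phi> z + of_real (E' (fst z)) * \<phi> z)"
    using C1c_pd(1)[OF assms] C1c_cont[OF assms]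
    by (intro continuous_intros continuous_on_compose2[OF cE] continuous_on_compose2[OF cE']) auto
  have cy: "continuous_on UNIV (\<lambda>z. of_real (E (fst z)) * pdy \<phi> z)"
    using C1c_pd(2)[OF assms]
    by (intro continuous_intros continuous_on_compose2[OF cE]) auto
  show "C1c (W \<phi>)" unfolding C1c_def using c1 cx cy W_deriv[OF assms] by blast
  have fr: "frechet_derivative (W \<phi>) (at z) = (\<lambda>(u, v). of_real u * (of_real (E (fst z)) * pdx \<phi> z + of_real (E' (fst z)) * \<phi> z)
             + of_real v * (of_real (E (fst z)) * pdy \<phi> z))"
    by (rule frechet_derivative_at[OF W_deriv[OF assms], symmetric])
  show "pdx (W \<phi>) z = of_real (E (fst z)) * pdx \<phi> z + of_real (E' (fst z)) * \<phi> z"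
    unfolding pdx_def fr by simp
  show "pdy (W \<phi>) z = of_real (E (fst z)) * pdy \<phi> z"
    unfolding pdy_def fr by simp
qed

end

context weight begin

lemma mE: "(\<lambda>z. E (fst z)) \<in> borel_measurable MO"
  by (rule meas_MO_cont) (intro continuous_on_compose2[OF cE] continuous_intros, auto)

lemma mE': "(\<lambda>z. E' (fst z)) \<in> borel_measurable MO"
  by (rule meas_MO_cont) (intro continuous_on_compose2[OF cE'] continuous_intros, auto)

lemma L2_W: "L2 f \<Longrightarrow> L2 (W f)"
  unfolding W_def by (rule L2_scale[OF _ mE bE])

lemma L2_W': "L2 f \<Longrightarrow> L2 (\<lambda>z. of_real (E' (fst z)) * f z)"
  by (rule L2_scale[OF _ mE' bE'])

definition Gx where "Gx \<psi> gx z = of_real (E (fst z)) * gx z + of_real (E' (fst z)) * \<psi> z"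

lemma L2_Gx: "L2 \<psi> \<Longrightarrow> L2 gx \<Longrightarrow> L2 (Gx \<psi> gx)"
  unfolding Gx_def using L2_add[OF L2_W L2_W'] unfolding W_def by blast

lemma weak_dx_W:
  assumes "L2 \<psi>" "L2 gx" "weak_dx OmegaGui \<psi> gx"
  shows "weak_dx OmegaGui (W \<psi>) (Gx \<psi> gx)"
  unfolding weak_dx_def integral_MO
proof (intro allI impI)
  fix \<phi> assume a: "C1c \<phi> \<and> csupp \<phi> \<subseteq> OmegaGui"
  hence \<phi>: "C1c \<phi>" by simp
  have aW: "C1c (W \<phi>) \<and> csupp (W \<phi>) \<subseteq> OmegaGui" using a W_C1c(1) W_csupp by blast
  have wk: "integral\<^sup>L MO (\<lambda>z. \<psi> z * pdx (W \<phi>) z) = - integral\<^sup>L MO (\<lambda>z. gx z * W \<phi> z)"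
    using assms(3) aW unfolding weak_dx_def integral_MO by blast
  have L: "L2 \<phi>" "L2 (pdx \<phi>)" using C1c_L2[OF \<phi>] by auto
  have i1: "integrable MO (\<lambda>z. W \<psi> z * pdx \<phi> z)" by (rule L2_prod[OF L2_W[OF assms(1)] L(2)])
  have i2: "integrable MO (\<lambda>z. (of_real (E' (fst z)) * \<psi> z) * \<phi> z)" by (rule L2_prod[OF L2_W'[OF assms(1)] L(1)])
  have i3: "integrable MO (\<lambda>z. W gx z * \<phi> z)" by (rule L2_prod[OF L2_W[OF assms(2)] L(1)])
  have "integral\<^sup>L MO (\<lambda>z. \<psi> z * pdx (W \<phi>) z)
      = integral\<^sup>L MO (\<lambda>z. W \<psi> z * pdx \<phi> z + (of_real (E' (fst z)) * \<psi> z) * \<phi> z)"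
    by (rule Bochner_Integration.integral_cong) (auto simp: W_C1c(2)[OF \<phi>] W_def algebra_simps)
  also have "\<dots> = integral\<^sup>L MO (\<lambda>z. W \<psi> z * pdx \<phi> z) + integral\<^sup>L MO (\<lambda>z. (of_real (E' (fst z)) * \<psi> z) * \<phi> z)"
    by (rule Bochner_Integration.integral_add[OF i1 i2])
  finally have e1: "integral\<^sup>L MO (\<lambda>z. \<psi> z * pdx (W \<phi>) z) = integral\<^sup>L MO (\<lambda>z. W \<psi> z * pdx \<phi> z) + integral\<^sup>L MO (\<lambda>z. (of_real (E' (fst z)) * \<psi> z) * \<phi> z)" .
  have e2: "integral\<^sup>L MO (\<lambda>z. gx z * W \<phi> z) = integral\<^sup>L MO (\<lambda>z. W gx z * \<phi> z)"
    by (rule Bochner_Integration.integral_cong) (auto simp: W_def algebra_simps)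
  have "integral\<^sup>L MO (\<lambda>z. Gx \<psi> gx z * \<phi> z) = integral\<^sup>L MO (\<lambda>z. W gx z * \<phi> z + (of_real (E' (fst z)) * \<psi> z) * \<phi> z)"
    by (rule Bochner_Integration.integral_cong) (auto simp: Gx_def W_def algebra_simps)
  also have "\<dots> = integral\<^sup>L MO (\<lambda>z. W gx z * \<phi> z) + integral\<^sup>L MO (\<lambda>z. (of_real (E' (fst z)) * \<psi> z) * \<phi> z)"
    by (rule Bochner_Integration.integral_add[OF i3 i2])
  finally have e3: "integral\<^sup>L MO (\<lambda>z. Gx \<psi> gx z * \<phi> z) = integral\<^sup>L MO (\<lambda>z. W gx z * \<phi> z) + integral\<^sup>L MO (\<lambda>z. (of_real (E' (fst z)) * \<psi> z) * \<phi> z)" .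
  show "integral\<^sup>L MO (\<lambda>z. W \<psi> z * pdx \<phi> z) = - integral\<^sup>L MO (\<lambda>z. Gx \<psi> gx z * \<phi> z)"
    using wk e1 e2 e3 by (simp add: algebra_simps)
qed

lemma weak_dy_W:
  assumes "L2 \<psi>" "L2 gy" "weak_dy OmegaGui \<psi> gy"
  shows "weak_dy OmegaGui (W \<psi>) (W gy)"
  unfolding weak_dy_def integral_MO
proof (intro allI impI)
  fix \<phi> assume a: "C1c \<phi> \<and> csupp \<phi> \<subseteq> OmegaGui"
  hence \<phi>: "C1c \<phi>" by simp
  have aW: "C1c (W \<phi>) \<and> csupp (W \<phi>) \<subseteq> OmegaGui" using a W_C1c(1) W_csupp by blast
  have wk: "integral\<^sup>L MO (\<lambda>z. \<psi> z * pdy (W \<phi>) z) = - integral\<^sup>L MO (\<lambda>z. gy z * W \<phi> z)"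
    using assms(3) aW unfolding weak_dy_def integral_MO by blast
  have e1: "integral\<^sup>L MO (\<lambda>z. \<psi> z * pdy (W \<phi>) z) = integral\<^sup>L MO (\<lambda>z. W \<psi> z * pdy \<phi> z)"
    by (rule Bochner_Integration.integral_cong) (auto simp: W_C1c(3)[OF \<phi>] W_def algebra_simps)
  have e2: "integral\<^sup>L MO (\<lambda>z. gy z * W \<phi> z) = integral\<^sup>L MO (\<lambda>z. W gy z * \<phi> z)"
    by (rule Bochner_Integration.integral_cong) (auto simp: W_def algebra_simps)
  show "integral\<^sup>L MO (\<lambda>z. W \<psi> z * pdy \<phi> z) = - integral\<^sup>L MO (\<lambda>z. W gy z * \<phi> z)"
    using wk e1 e2 by simp
qed

end

lemma sq_add_le: "(cmod (x + y))\<^sup>2 \<le> 2 * (cmod x)\<^sup>2 + 2 * (cmod y)\<^sup>2"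
proof -
  have t: "cmod (x + y) \<le> cmod x + cmod y" by (rule norm_triangle_ineq)
  have "(cmod (x + y))\<^sup>2 \<le> (cmod x + cmod y)\<^sup>2" using t by (intro power_mono) auto
  also have "\<dots> \<le> 2 * (cmod x)\<^sup>2 + 2 * (cmod y)\<^sup>2"
    using sum_squares_bound[of "cmod x" "cmod y"] by (simp add: power2_eq_square algebra_simps)
  finally show ?thesis .
qed

lemma sq_scale_le: "\<bar>e\<bar> \<le> B \<Longrightarrow> (cmod (of_real e * x))\<^sup>2 \<le> B\<^sup>2 * (cmod x)\<^sup>2"
proof -
  assume "\<bar>e\<bar> \<le> B"
  hence "\<bar>e\<bar>\<^sup>2 \<le> B\<^sup>2" by (intro power_mono) auto
  hence "\<bar>e\<bar>\<^sup>2 * (cmod x)\<^sup>2 \<le> B\<^sup>2 * (cmod x)\<^sup>2" by (intro mult_right_mono) auto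
  thus ?thesis by (simp add: norm_mult power_mult_distrib)
qed

context weight begin

lemma B_nonneg: "0 \<le> B" using bE[of 0] by simp

lemma H1Mix_W:
  assumes H: "H1Mix \<psi> gx gy"
  shows "H1Mix (W \<psi>) (Gx \<psi> gx) (W gy)"
proof -
  have L: "L2 \<psi>" "L2 gx" "L2 gy" and wx: "weak_dx OmegaGui \<psi> gx" and wy: "weak_dy OmegaGui \<psi> gy"
    using H unfolding H1Mix_def H1on_def L2on_iff by auto
  obtain \<phi> :: "nat \<Rightarrow> real \<times> real \<Rightarrow> complex" where
    \<phi>: "\<And>n. C1c (\<phi> n)" "\<And>n. csupp (\<phi> n) \<inter> (frontier OmegaGui - NeuGui) = {}"
    and conv: "(\<lambda>n. integral\<^sup>L MO (\<lambda>z. (cmod (\<phi> n z - \<psi> z))\<^sup>2 + (cmod (pdx (\<phi> n) z - gx z))\<^sup>2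
                                     + (cmod (pdy (\<phi> n) z - gy z))\<^sup>2)) \<longlonglongrightarrow> 0"
    using H unfolding H1Mix_def integral_MO by blast
  define I where "I n z = (cmod (\<phi> n z - \<psi> z))\<^sup>2 + (cmod (pdx (\<phi> n) z - gx z))\<^sup>2 + (cmod (pdy (\<phi> n) z - gy z))\<^sup>2" for n z
  define J where "J n z = (cmod (W (\<phi> n) z - W \<psi> z))\<^sup>2 + (cmod (pdx (W (\<phi> n)) z - Gx \<psi> gx z))\<^sup>2
                                     + (cmod (pdy (W (\<phi> n)) z - W gy z))\<^sup>2" for n z
  have Lp: "L2 (\<phi> n)" "L2 (pdx (\<phi> n))" "L2 (pdy (\<phi> n))" for n using C1c_L2[OF \<phi>(1)] by auto
  have iI: "integrable MO (I n)" for n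
    unfolding I_def using L2_diff[OF Lp(1) L(1)] L2_diff[OF Lp(2) L(2)] L2_diff[OF Lp(3) L(3)]
    by (intro Bochner_Integration.integrable_add) (auto simp: L2_def)
  have LWp: "L2 (W (\<phi> n))" "L2 (pdx (W (\<phi> n)))" "L2 (pdy (W (\<phi> n)))" for n
    using C1c_L2[OF W_C1c(1)[OF \<phi>(1)]] by auto
  have iJ: "integrable MO (J n)" for n
    unfolding J_def using L2_diff[OF LWp(1) L2_W[OF L(1)]] L2_diff[OF LWp(2) L2_Gx[OF L(1) L(2)]] L2_diff[OF LWp(3) L2_W[OF L(3)]]
    by (intro Bochner_Integration.integrable_add) (auto simp: L2_def)
  have pw: "J n z \<le> (3 * B\<^sup>2) * I n z" for n z
  proof -
    have a: "(cmod (W (\<phi> n) z - W \<psi> z))\<^sup>2 \<le> B\<^sup>2 * (cmod (\<phi> n z - \<psi> z))\<^sup>2"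
      using sq_scale_le[OF bE[of "fst z"], of "\<phi> n z - \<psi> z"] by (simp add: W_def algebra_simps)
    have "pdx (W (\<phi> n)) z - Gx \<psi> gx z = of_real (E (fst z)) * (pdx (\<phi> n) z - gx z) + of_real (E' (fst z)) * (\<phi> n z - \<psi> z)"
      by (simp add: W_C1c(2)[OF \<phi>(1)] Gx_def algebra_simps)
    hence "(cmod (pdx (W (\<phi> n)) z - Gx \<psi> gx z))\<^sup>2 \<le> 2 * (cmod (of_real (E (fst z)) * (pdx (\<phi> n) z - gx z)))\<^sup>2 + 2 * (cmod (of_real (E' (fst z)) * (\<phi> n z - \<psi> z)))\<^sup>2"
      using sq_add_le by metis
    also have "\<dots> \<le> 2 * (B\<^sup>2 * (cmod (pdx (\<phi> n) z - gx z))\<^sup>2) + 2 * (B\<^sup>2 * (cmod (\<phi> n z - \<psi> z))\<^sup>2)"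
      using sq_scale_le[OF bE[of "fst z"], of "pdx (\<phi> n) z - gx z"] sq_scale_le[OF bE'[of "fst z"], of "\<phi> n z - \<psi> z"]
      by linarith
    finally have b: "(cmod (pdx (W (\<phi> n)) z - Gx \<psi> gx z))\<^sup>2 \<le> 2 * (B\<^sup>2 * (cmod (pdx (\<phi> n) z - gx z))\<^sup>2) + 2 * (B\<^sup>2 * (cmod (\<phi> n z - \<psi> z))\<^sup>2)" .
    have c: "(cmod (pdy (W (\<phi> n)) z - W gy z))\<^sup>2 \<le> B\<^sup>2 * (cmod (pdy (\<phi> n) z - gy z))\<^sup>2"
      using sq_scale_le[OF bE[of "fst z"], of "pdy (\<phi> n) z - gy z"] by (simp add: W_C1c(3)[OF \<phi>(1)] W_def algebra_simps)
    have nn: "0 \<le> B\<^sup>2 * (cmod (pdy (\<phi> n) z - gy z))\<^sup>2" "0 \<le> B\<^sup>2 * (cmod (pdx (\<phi> n) z - gx z))\<^sup>2"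
      "0 \<le> B\<^sup>2 * (cmod (\<phi> n z - \<psi> z))\<^sup>2" by auto
    show ?thesis unfolding J_def I_def distrib_left using a b c nn by linarith
  qed
  have Jnn: "0 \<le> J n z" for n z unfolding J_def by simp
  have convI: "(\<lambda>n. integral\<^sup>L MO (I n)) \<longlonglongrightarrow> 0" using conv unfolding I_def .
  have convJ: "(\<lambda>n. integral\<^sup>L MO (J n)) \<longlonglongrightarrow> 0"
  proof (rule tendsto_sandwich[where f="\<lambda>n. 0" and h="\<lambda>n. (3 * B\<^sup>2) * integral\<^sup>L MO (I n)"])
    show "\<forall>\<^sub>F n in sequentially. 0 \<le> integral\<^sup>L MO (J n)"
      using Jnn by (auto intro: Bochner_Integration.integral_nonneg_AE)
    show "\<forall>\<^sub>F n in sequentially. integral\<^sup>L MO (J n) \<le> (3 * B\<^sup>2) * integral\<^sup>L MO (I n)"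
    proof (rule always_eventually, rule allI)
      fix n
      have "integral\<^sup>L MO (J n) \<le> integral\<^sup>L MO (\<lambda>z. (3 * B\<^sup>2) * I n z)"
        using iJ iI pw by (intro integral_mono) auto
      thus "integral\<^sup>L MO (J n) \<le> (3 * B\<^sup>2) * integral\<^sup>L MO (I n)" by simp
    qed
    show "(\<lambda>n. 0) \<longlonglongrightarrow> (0::real)" by simp
    show "(\<lambda>n. (3 * B\<^sup>2) * integral\<^sup>L MO (I n)) \<longlonglongrightarrow> 0"
      using tendsto_mult_right_zero[OF convI] by simp
  qed
  have H1: "H1on OmegaGui (W \<psi>) (Gx \<psi> gx) (W gy)"
    unfolding H1on_def L2on_iff
    using L2_W[OF L(1)] L2_Gx[OF L(1) L(2)] L2_W[OF L(3)] weak_dx_W[OF L(1) L(2) wx] weak_dy_W[OF L(1) L(3) wy]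
    by blast
  have D: "csupp (W (\<phi> n)) \<inter> (frontier OmegaGui - NeuGui) = {}" for n
    using W_csupp[of "\<phi> n"] \<phi>(2)[of n] by blast
  show ?thesis unfolding H1Mix_def integral_MO
  proof (intro conjI exI[where x="\<lambda>n. W (\<phi> n)"])
    show "H1on OmegaGui (W \<psi>) (Gx \<psi> gx) (W gy)" by (rule H1)
    show "\<forall>n. C1c (W (\<phi> n)) \<and> csupp (W (\<phi> n)) \<inter> (frontier OmegaGui - NeuGui) = {}"
      using W_C1c(1)[OF \<phi>(1)] D by blast
    show "(\<lambda>n. integral\<^sup>L MO (\<lambda>z. (cmod (W (\<phi> n) z - W \<psi> z))\<^sup>2 + (cmod (pdx (W (\<phi> n)) z - Gx \<psi> gx z))\<^sup>2
                                     + (cmod (pdy (W (\<phi> n)) z - W gy z))\<^sup>2)) \<longlonglongrightarrow> 0"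
      using convJ unfolding J_def .
  qed
qed

end

lemma int_wt:
  assumes "L2 f" "b \<in> borel_measurable MO" "\<And>z. \<bar>b z\<bar> \<le> B"
  shows "integrable MO (\<lambda>z. b z * (cmod (f z))\<^sup>2)"
proof (rule Bochner_Integration.integrable_bound[where f="\<lambda>z. B * (cmod (f z))\<^sup>2"])
  show "integrable MO (\<lambda>z. B * (cmod (f z))\<^sup>2)" using assms(1) by (auto simp: L2_def)
  have m: "(\<lambda>z. (cmod (f z))\<^sup>2) \<in> borel_measurable MO" using L2_meas[OF assms(1)] by simp
  show "(\<lambda>z. b z * (cmod (f z))\<^sup>2) \<in> borel_measurable MO" using assms(2) m by (rule borel_measurable_times)
  show "AE z in MO. norm (b z * (cmod (f z))\<^sup>2) \<le> norm (B * (cmod (f z))\<^sup>2)"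
  proof (rule AE_I2)
    fix z
    have "\<bar>b z\<bar> * (cmod (f z))\<^sup>2 \<le> B * (cmod (f z))\<^sup>2" using assms(3) by (intro mult_right_mono) auto
    moreover have "0 \<le> B" using assms(3)[of z] by linarith
    ultimately show "norm (b z * (cmod (f z))\<^sup>2) \<le> norm (B * (cmod (f z))\<^sup>2)" by (simp add: abs_mult)
  qed
qed

lemma sq_split: 
  fixes a b :: complex and d :: real
  assumes "d > 0"
  shows "(cmod (a + b))\<^sup>2 \<le> (1 + d) * (cmod a)\<^sup>2 + (1 + 1/d) * (cmod b)\<^sup>2"
proof -
  have t: "cmod (a + b) \<le> cmod a + cmod b" by (rule norm_triangle_ineq)
  have "(cmod (a + b))\<^sup>2 \<le> (cmod a + cmod b)\<^sup>2" using t by (intro power_mono) auto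
  also have "\<dots> \<le> (1 + d) * (cmod a)\<^sup>2 + (1 + 1/d) * (cmod b)\<^sup>2"
  proof -
    have "0 \<le> (d * cmod a - cmod b)\<^sup>2 / d" using assms by simp
    hence "2 * cmod a * cmod b \<le> d * (cmod a)\<^sup>2 + (cmod b)\<^sup>2 / d"
      using assms by (simp add: power2_eq_square field_simps)
    thus ?thesis by (simp add: power2_eq_square algebra_simps)
  qed
  finally show ?thesis .
qed

lemma mPP: "(\<lambda>z. indicator PP z :: real) \<in> borel_measurable MO"
  unfolding MO_def by (rule measurable_restrict_space1) simp

lemma PP_sub: "PP \<subseteq> OmegaGui" by (auto simp: PP_def)

lemma nn_to_MO:
  assumes "integrable MO (\<lambda>z. w (fst z) * indicator PP z * (cmod (f z))\<^sup>2)" "\<And>x. 0 \<le> w x"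
  shows "(\<integral>\<^sup>+ z. ennreal (w (fst z) * (cmod (f z))\<^sup>2) * indicator PP z \<partial>lborel)
     = ennreal (integral\<^sup>L MO (\<lambda>z. w (fst z) * indicator PP z * (cmod (f z))\<^sup>2))"
proof -
  have "(\<integral>\<^sup>+ z. ennreal (w (fst z) * (cmod (f z))\<^sup>2) * indicator PP z \<partial>lborel)
     = (\<integral>\<^sup>+ z. ennreal (w (fst z) * indicator PP z * (cmod (f z))\<^sup>2) * indicator OmegaGui z \<partial>lborel)"
    using PP_sub by (intro nn_integral_cong) (auto simp: indicator_def)
  also have "\<dots> = (\<integral>\<^sup>+ z. ennreal (w (fst z) * indicator PP z * (cmod (f z))\<^sup>2) \<partial>MO)"
    by (rule nn_integral_MO[symmetric])
  also have "\<dots> = ennreal (integral\<^sup>L MO (\<lambda>z. w (fst z) * indicator PP z * (cmod (f z))\<^sup>2))"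
    by (rule nn_integral_eq_integral[OF assms(1)]) (use assms(2) in auto)
  finally show ?thesis .
qed

locale pweight =
  fixes w :: "real \<Rightarrow> real" and B :: real
  assumes cw: "continuous_on UNIV w" and w0: "\<And>x. 0 \<le> w x" and wB: "\<And>x. w x \<le> B"
begin

definition wp where "wp z = w (fst z) * indicator PP z"

lemma mwp: "wp \<in> borel_measurable MO"
proof -
  have "(\<lambda>z. w (fst z)) \<in> borel_measurable MO"
    by (rule meas_MO_cont) (intro continuous_on_compose2[OF cw] continuous_intros, auto)
  thus ?thesis unfolding wp_def[abs_def] using mPP by (intro borel_measurable_times) auto
qed

lemma wp_bd: "\<bar>wp z\<bar> \<le> B" "0 \<le> wp z"
  using w0[of "fst z"] wB[of "fst z"] by (auto simp: wp_def indicator_def)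

lemma int_wp: "L2 f \<Longrightarrow> integrable MO (\<lambda>z. wp z * (cmod (f z))\<^sup>2)"
  by (rule int_wt[OF _ mwp wp_bd(1)])

lemma poinc_C1c_MO:
  assumes \<phi>: "C1c \<phi>" and D: "csupp \<phi> \<inter> (frontier OmegaGui - NeuGui) = {}"
  shows "integral\<^sup>L MO (\<lambda>z. wp z * (cmod (\<phi> z))\<^sup>2) \<le> 4 * integral\<^sup>L MO (\<lambda>z. wp z * (cmod (pdy \<phi> z))\<^sup>2)"
proof -
  have wm: "w \<in> borel_measurable borel" by (rule borel_measurable_continuous_onI[OF cw])
  have i1: "integrable MO (\<lambda>z. w (fst z) * indicator PP z * (cmod (\<phi> z))\<^sup>2)"
    using int_wp[OF C1c_L2(1)[OF \<phi>]] by (simp add: wp_def)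
  have i2: "integrable MO (\<lambda>z. w (fst z) * indicator PP z * (cmod (pdy \<phi> z))\<^sup>2)"
    using int_wp[OF C1c_L2(3)[OF \<phi>]] by (simp add: wp_def)
  have "ennreal (integral\<^sup>L MO (\<lambda>z. w (fst z) * indicator PP z * (cmod (\<phi> z))\<^sup>2))
     \<le> 4 * ennreal (integral\<^sup>L MO (\<lambda>z. w (fst z) * indicator PP z * (cmod (pdy \<phi> z))\<^sup>2))"
    using poinc_nn[OF \<phi> D wm w0] unfolding nn_to_MO[OF i1 w0] nn_to_MO[OF i2 w0] .
  also have "\<dots> = ennreal (4 * integral\<^sup>L MO (\<lambda>z. w (fst z) * indicator PP z * (cmod (pdy \<phi> z))\<^sup>2))"
    by (subst ennreal_mult') auto
  finally have "integral\<^sup>L MO (\<lambda>z. w (fst z) * indicator PP z * (cmod (\<phi> z))\<^sup>2)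
     \<le> 4 * integral\<^sup>L MO (\<lambda>z. w (fst z) * indicator PP z * (cmod (pdy \<phi> z))\<^sup>2)"
    by (rule ennreal_le_iff[THEN iffD1, rotated]) (intro mult_nonneg_nonneg Bochner_Integration.integral_nonneg_AE AE_I2, auto simp: w0)
  thus ?thesis by (simp add: wp_def)
qed

end

lemma int_comb_le:
  fixes f g h :: "_ \<Rightarrow> real"
  assumes "integrable M f" "integrable M g" "integrable M h" "\<And>z. f z \<le> c1 * g z + c2 * h z"
  shows "integral\<^sup>L M f \<le> c1 * integral\<^sup>L M g + c2 * integral\<^sup>L M h"
proof -
  have "integral\<^sup>L M f \<le> integral\<^sup>L M (\<lambda>z. c1 * g z + c2 * h z)"
    using assms by (intro integral_mono) auto
  also have "\<dots> = c1 * integral\<^sup>L M g + c2 * integral\<^sup>L M h"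
    using assms by (simp add: Bochner_Integration.integral_add)
  finally show ?thesis .
qed

context pweight begin

lemma B0: "0 \<le> B" using w0[of 0] wB[of 0] by linarith

lemma poinc_psi:
  assumes H: "H1Mix \<psi> gx gy"
  shows "integral\<^sup>L MO (\<lambda>z. wp z * (cmod (\<psi> z))\<^sup>2) \<le> (121/25) * integral\<^sup>L MO (\<lambda>z. wp z * (cmod (gy z))\<^sup>2)"
proof -
  have L: "L2 \<psi>" "L2 gx" "L2 gy"
    using H unfolding H1Mix_def H1on_def L2on_iff by auto
  obtain \<phi> :: "nat \<Rightarrow> real \<times> real \<Rightarrow> complex" where
    \<phi>: "\<And>n. C1c (\<phi> n)" "\<And>n. csupp (\<phi> n) \<inter> (frontier OmegaGui - NeuGui) = {}"
    and conv: "(\<lambda>n. integral\<^sup>L MO (\<lambda>z. (cmod (\<phi> n z - \<psi> z))\<^sup>2 + (cmod (pdx (\<phi> n) z - gx z))\<^sup>2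
                                     + (cmod (pdy (\<phi> n) z - gy z))\<^sup>2)) \<longlonglongrightarrow> 0"
    using H unfolding H1Mix_def integral_MO by blast
  define I where "I n z = (cmod (\<phi> n z - \<psi> z))\<^sup>2 + (cmod (pdx (\<phi> n) z - gx z))\<^sup>2 + (cmod (pdy (\<phi> n) z - gy z))\<^sup>2" for n z
  have Lp: "L2 (\<phi> n)" "L2 (pdx (\<phi> n))" "L2 (pdy (\<phi> n))" for n using C1c_L2[OF \<phi>(1)] by auto
  have d1: "L2 (\<lambda>z. \<phi> n z - \<psi> z)" "L2 (\<lambda>z. pdx (\<phi> n) z - gx z)" "L2 (\<lambda>z. pdy (\<phi> n) z - gy z)" for n
    using L2_diff[OF Lp(1) L(1)] L2_diff[OF Lp(2) L(2)] L2_diff[OF Lp(3) L(3)] by auto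
  have iI: "integrable MO (I n)" for n
    unfolding I_def using d1[of n]
    by (intro Bochner_Integration.integrable_add) (auto simp: L2_def)
  define X where "X = integral\<^sup>L MO (\<lambda>z. wp z * (cmod (\<psi> z))\<^sup>2)"
  define Y where "Y = integral\<^sup>L MO (\<lambda>z. wp z * (cmod (gy z))\<^sup>2)"
  define a where "a n = integral\<^sup>L MO (I n)" for n
  have bound: "X \<le> (121/25) * Y + (60 * B) * a n" for n
  proof -
    define P where "P = integral\<^sup>L MO (\<lambda>z. wp z * (cmod (\<phi> n z))\<^sup>2)"
    define Q where "Q = integral\<^sup>L MO (\<lambda>z. wp z * (cmod (pdy (\<phi> n) z))\<^sup>2)"
    define e1 where "e1 = integral\<^sup>L MO (\<lambda>z. (cmod (\<phi> n z - \<psi> z))\<^sup>2)"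
    define e2 where "e2 = integral\<^sup>L MO (\<lambda>z. (cmod (pdy (\<phi> n) z - gy z))\<^sup>2)"
    have ie1: "integrable MO (\<lambda>z. (cmod (\<phi> n z - \<psi> z))\<^sup>2)" using d1(1)[of n] by (simp add: L2_def)
    have ie2: "integrable MO (\<lambda>z. (cmod (pdy (\<phi> n) z - gy z))\<^sup>2)" using d1(3)[of n] by (simp add: L2_def)
    have PQ: "P \<le> 4 * Q" unfolding P_def Q_def by (rule poinc_C1c_MO[OF \<phi>(1) \<phi>(2)])
    have XP: "X \<le> (11/10) * P + (11 * B) * e1" unfolding X_def P_def e1_def
    proof (rule int_comb_le[OF int_wp[OF L(1)] int_wp[OF Lp(1)] ie1])
      fix z
      have "(cmod (\<psi> z))\<^sup>2 \<le> (1 + 1/10) * (cmod (\<phi> n z))\<^sup>2 + (1 + 1/(1/10)) * (cmod (\<psi> z - \<phi> n z))\<^sup>2"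
        using sq_split[of "1/10" "\<phi> n z" "\<psi> z - \<phi> n z"] by simp
      hence s: "(cmod (\<psi> z))\<^sup>2 \<le> (11/10) * (cmod (\<phi> n z))\<^sup>2 + 11 * (cmod (\<phi> n z - \<psi> z))\<^sup>2"
        by (simp add: norm_minus_commute)
      have "wp z * (cmod (\<psi> z))\<^sup>2 \<le> wp z * ((11/10) * (cmod (\<phi> n z))\<^sup>2 + 11 * (cmod (\<phi> n z - \<psi> z))\<^sup>2)"
        using s wp_bd(2) by (rule mult_left_mono)
      also have "\<dots> \<le> (11/10) * (wp z * (cmod (\<phi> n z))\<^sup>2) + (11 * B) * (cmod (\<phi> n z - \<psi> z))\<^sup>2"
      proof -
        have "wp z * (cmod (\<phi> n z - \<psi> z))\<^sup>2 \<le> B * (cmod (\<phi> n z - \<psi> z))\<^sup>2"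
          using wp_bd(1)[of z] by (intro mult_right_mono) auto
        thus ?thesis by (simp add: algebra_simps)
      qed
      finally show "wp z * (cmod (\<psi> z))\<^sup>2 \<le> (11/10) * (wp z * (cmod (\<phi> n z))\<^sup>2) + (11 * B) * (cmod (\<phi> n z - \<psi> z))\<^sup>2" .
    qed
    have QY: "Q \<le> (11/10) * Y + (11 * B) * e2" unfolding Q_def Y_def e2_def
    proof (rule int_comb_le[OF int_wp[OF Lp(3)] int_wp[OF L(3)] ie2])
      fix z
      have "(cmod (pdy (\<phi> n) z))\<^sup>2 \<le> (1 + 1/10) * (cmod (gy z))\<^sup>2 + (1 + 1/(1/10)) * (cmod (pdy (\<phi> n) z - gy z))\<^sup>2"
        using sq_split[of "1/10" "gy z" "pdy (\<phi> n) z - gy z"] by simp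
      hence s: "(cmod (pdy (\<phi> n) z))\<^sup>2 \<le> (11/10) * (cmod (gy z))\<^sup>2 + 11 * (cmod (pdy (\<phi> n) z - gy z))\<^sup>2"
        by simp
      have "wp z * (cmod (pdy (\<phi> n) z))\<^sup>2 \<le> wp z * ((11/10) * (cmod (gy z))\<^sup>2 + 11 * (cmod (pdy (\<phi> n) z - gy z))\<^sup>2)"
        using s wp_bd(2) by (rule mult_left_mono)
      also have "\<dots> \<le> (11/10) * (wp z * (cmod (gy z))\<^sup>2) + (11 * B) * (cmod (pdy (\<phi> n) z - gy z))\<^sup>2"
      proof -
        have "wp z * (cmod (pdy (\<phi> n) z - gy z))\<^sup>2 \<le> B * (cmod (pdy (\<phi> n) z - gy z))\<^sup>2"
          using wp_bd(1)[of z] by (intro mult_right_mono) auto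
        thus ?thesis by (simp add: algebra_simps)
      qed
      finally show "wp z * (cmod (pdy (\<phi> n) z))\<^sup>2 \<le> (11/10) * (wp z * (cmod (gy z))\<^sup>2) + (11 * B) * (cmod (pdy (\<phi> n) z - gy z))\<^sup>2" .
    qed
    have e1a: "e1 \<le> a n" unfolding e1_def a_def using ie1 iI by (intro integral_mono) (auto simp: I_def)
    have e2a: "e2 \<le> a n" unfolding e2_def a_def using ie2 iI by (intro integral_mono) (auto simp: I_def)
    have e10: "0 \<le> e1" unfolding e1_def by (intro Bochner_Integration.integral_nonneg_AE) auto
    have e20: "0 \<le> e2" unfolding e2_def by (intro Bochner_Integration.integral_nonneg_AE) auto
    have "B * e1 \<le> B * a n" using e1a B0 by (rule mult_left_mono)
    moreover have "B * e2 \<le> B * a n" using e2a B0 by (rule mult_left_mono)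
    moreover have "0 \<le> B * a n" using B0 e10 e1a by simp
    ultimately show ?thesis using XP QY PQ by (simp add: algebra_simps)
  qed
  have conva: "a \<longlonglongrightarrow> 0" using conv unfolding a_def I_def .
  have lim: "(\<lambda>n. (121/25) * Y + (60 * B) * a n) \<longlonglongrightarrow> (121/25) * Y + (60 * B) * 0"
    by (intro tendsto_intros conva)
  have "X \<le> (121/25) * Y + (60 * B) * 0"
      proof (rule tendsto_lowerbound[OF lim])
    show "\<forall>\<^sub>F n in sequentially. X \<le> (121/25) * Y + (60 * B) * a n"
      by (rule always_eventually) (use bound in blast)
  qed simp
  thus ?thesis by (simp add: X_def Y_def)
qed

end

definition sfun :: "real \<Rightarrow> real \<Rightarrow> real" where "sfun e x = x / sqrt (1 + (e * x)\<^sup>2)"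
definition sder :: "real \<Rightarrow> real \<Rightarrow> real" where "sder e x = 1 / ((1 + (e * x)\<^sup>2) * sqrt (1 + (e * x)\<^sup>2))"

lemma sq_pos: "0 < 1 + (t::real)\<^sup>2" by (simp add: add_pos_nonneg)

lemma sfun_deriv: "(sfun e has_real_derivative sder e x) (at x)"
proof -
  have p: "0 < 1 + (e * x)\<^sup>2" by (rule sq_pos)
  have s: "0 < sqrt (1 + (e * x)\<^sup>2)" using p by simp
  have "((\<lambda>x. x / sqrt (1 + (e * x)\<^sup>2)) has_real_derivative
      (1 * sqrt (1 + (e * x)\<^sup>2) - x * (inverse (sqrt (1 + (e * x)\<^sup>2)) / 2 * (2 * (e * x) * (e * 1)))) / (sqrt (1 + (e * x)\<^sup>2))\<^sup>2) (at x)"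
    using p s by (auto intro!: derivative_eq_intros)
  moreover have "(1 * sqrt (1 + (e * x)\<^sup>2) - x * (inverse (sqrt (1 + (e * x)\<^sup>2)) / 2 * (2 * (e * x) * (e * 1)))) / (sqrt (1 + (e * x)\<^sup>2))\<^sup>2
     = sder e x"
  proof -
    let ?r = "sqrt (1 + (e * x)\<^sup>2)"
    have r2: "?r\<^sup>2 = 1 + (e * x)\<^sup>2" using p by simp
    have "(1 * ?r - x * (inverse ?r / 2 * (2 * (e * x) * (e * 1)))) / ?r\<^sup>2 = (?r\<^sup>2 - (e*x)\<^sup>2) / (?r\<^sup>2 * ?r)"
      using s by (simp add: field_simps power2_eq_square)
    also have "\<dots> = 1 / ((1 + (e * x)\<^sup>2) * ?r)" unfolding r2 by simp
    finally show ?thesis by (simp add: sder_def)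
  qed
  ultimately show ?thesis unfolding sfun_def[abs_def] by simp
qed

lemma sder_cont: "continuous_on UNIV (sder e)"
proof -
  have "\<And>x. (1 + (e * x)\<^sup>2) * sqrt (1 + (e * x)\<^sup>2) \<noteq> 0" using sq_pos by (simp add: add_nonneg_eq_0_iff)
  thus ?thesis unfolding sder_def[abs_def] by (intro continuous_intros) auto
qed

lemma sder_bd: "0 \<le> sder e x" "sder e x \<le> 1"
proof -
  have p: "1 \<le> 1 + (e * x)\<^sup>2" by simp
  hence "1 \<le> sqrt (1 + (e * x)\<^sup>2)" by simp
  hence "1 \<le> (1 + (e * x)\<^sup>2) * sqrt (1 + (e * x)\<^sup>2)" using p by (metis mult_mono' mult_1 zero_le_one)
  thus "0 \<le> sder e x" "sder e x \<le> 1" by (auto simp: sder_def)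
qed

lemma sfun_bd: assumes "e > 0" shows "\<bar>sfun e x\<bar> \<le> 1 / e"
proof -
  have q: "\<bar>e * x\<bar> = sqrt ((e * x)\<^sup>2)" by simp
  have "sqrt ((e * x)\<^sup>2) \<le> sqrt (1 + (e * x)\<^sup>2)" by (rule real_sqrt_le_mono) simp
  hence "\<bar>e * x\<bar> \<le> sqrt (1 + (e * x)\<^sup>2)" using q by linarith
  moreover have "\<bar>e * x\<bar> = e * \<bar>x\<bar>" using assms by (simp add: abs_mult)
  ultimately have "e * \<bar>x\<bar> \<le> sqrt (1 + (e * x)\<^sup>2)" by simp
  moreover have "0 < sqrt (1 + (e * x)\<^sup>2)" using sq_pos by simp
  ultimately show ?thesis using assms by (simp add: sfun_def abs_div field_simps)
qed

lemma sfun_neg: "x \<le> 0 \<Longrightarrow> sfun e x \<le> 0"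
  by (simp add: sfun_def divide_nonpos_pos sq_pos)

definition Ew :: "real \<Rightarrow> real \<Rightarrow> real \<Rightarrow> real" where "Ew a e x = exp (a * sfun e x)"
definition Ewd :: "real \<Rightarrow> real \<Rightarrow> real \<Rightarrow> real" where "Ewd a e x = a * sder e x * exp (a * sfun e x)"

lemma Ew_deriv: "(Ew a e has_real_derivative Ewd a e x) (at x)"
proof -
  have "((\<lambda>x. exp (a * sfun e x)) has_real_derivative exp (a * sfun e x) * (a * sder e x)) (at x)"
    by (auto intro!: derivative_eq_intros sfun_deriv)
  thus ?thesis by (simp add: Ew_def[abs_def] Ewd_def mult_ac)
qed

lemma sfun_cont: "continuous_on UNIV (sfun e)"
  using sfun_deriv by (meson DERIV_isCont continuous_at_imp_continuous_on)

lemma Ewd_cont: "continuous_on UNIV (Ewd a e)"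
  unfolding Ewd_def[abs_def]
  by (intro continuous_intros continuous_on_compose2[OF sder_cont] continuous_on_compose2[OF sfun_cont]) auto

lemma Ew_bd: assumes "a > 0" "e > 0"
  shows "\<bar>Ew a e x\<bar> \<le> (1 + a) * exp (a / e)" "\<bar>Ewd a e x\<bar> \<le> (1 + a) * exp (a / e)"
    "0 \<le> Ew a e x" "Ew a e x \<le> exp (a / e)" "0 \<le> Ewd a e x" "Ewd a e x \<le> a * Ew a e x"
proof -
  have "a * sfun e x \<le> a * (1 / e)" using sfun_bd[OF assms(2), of x] assms(1) by (intro mult_left_mono) auto
  hence ex: "exp (a * sfun e x) \<le> exp (a / e)" by simp
  show "Ew a e x \<le> exp (a / e)" using ex by (simp add: Ew_def)
  show "0 \<le> Ew a e x" by (simp add: Ew_def)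
  have "0 \<le> a * exp (a / e)" using assms by simp
  moreover have "(1 + a) * exp (a / e) = exp (a / e) + a * exp (a / e)" by (simp add: algebra_simps)
  ultimately have "exp (a * sfun e x) \<le> (1 + a) * exp (a / e)" using ex by linarith
  thus "\<bar>Ew a e x\<bar> \<le> (1 + a) * exp (a / e)" by (simp add: Ew_def)
  have s: "0 \<le> sder e x" "sder e x \<le> 1" by (rule sder_bd)+
  show "0 \<le> Ewd a e x" using s assms by (simp add: Ewd_def)
  have "a * sder e x \<le> a" using s assms by (simp add: mult_le_cancel_left1)
  hence "a * sder e x * exp (a * sfun e x) \<le> a * exp (a * sfun e x)" by (intro mult_right_mono) auto
  thus "Ewd a e x \<le> a * Ew a e x" by (simp add: Ewd_def Ew_def)
  also have "\<dots> \<le> a * exp (a / e)" using ex assms by (simp add: Ew_def)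
  also have "\<dots> \<le> (1 + a) * exp (a / e)" by simp
  finally show "\<bar>Ewd a e x\<bar> \<le> (1 + a) * exp (a / e)" using \<open>0 \<le> Ewd a e x\<close> by simp
qed

lemma Ew_neg: "a > 0 \<Longrightarrow> x \<le> 0 \<Longrightarrow> Ew a e x \<le> 1"
  using sfun_neg[of x e] by (simp add: Ew_def mult_nonneg_nonpos)

lemma Ew_weight: "a > 0 \<Longrightarrow> e > 0 \<Longrightarrow> weight (Ew a e) (Ewd a e) ((1 + a) * exp (a / e))"
  by unfold_locales (auto intro: Ew_deriv Ewd_cont Ew_bd)

lemma Ew_pweight: "a > 0 \<Longrightarrow> e > 0 \<Longrightarrow> pweight (Ew a e) ((1 + a) * exp (a / e))"
proof unfold_locales
  assume "a > 0" "e > 0"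
  show "continuous_on UNIV (Ew a e)"
    using Ew_deriv by (meson DERIV_isCont continuous_at_imp_continuous_on)
  show "\<And>x. 0 \<le> Ew a e x" by (simp add: Ew_def)
  show "\<And>x. Ew a e x \<le> (1 + a) * exp (a / e)" using Ew_bd[OF \<open>a > 0\<close> \<open>e > 0\<close>] by (meson abs_le_D1)
qed

lemma final_arith:
  fixes \<beta> SP D N G :: real
  assumes "0 \<le> \<beta>" "\<beta> \<le> 19/128" "0 \<le> SP" "0 \<le> D" "D \<le> N"
    "SP \<le> (121/25) * (\<beta> * (SP + D))" "G \<le> 2 * (\<beta> * (SP + D))"
  shows "SP + G \<le> 4 * N"
proof -
  define t where "t = \<beta> * (SP + D)"
  have t1: "t \<le> (19/128) * (SP + D)" unfolding t_def using assms by (intro mult_right_mono) auto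
  have t2: "SP \<le> (121/25) * t" "G \<le> 2 * t" using assms(6,7) unfolding t_def by auto
  show ?thesis using t1 t2 assms(3,4,5) by (simp add: field_simps)
qed

lemma Re_bound:
  fixes x y :: complex and h a al E E' :: real
  assumes "0 \<le> E" "0 \<le> E'" "E' \<le> a * E" "h * a = al" "0 < h"
  shows "(h\<^sup>2/2) * (E * (cmod x)\<^sup>2) \<le> h\<^sup>2 * (E * (cmod x)\<^sup>2) + h\<^sup>2 * (E' * Re (x * cnj y)) + (al\<^sup>2/2) * (E * (cmod y)\<^sup>2)"
proof -
  have r: "- (cmod x * cmod y) \<le> Re (x * cnj y)"
    using abs_Re_le_cmod[of "x * cnj y"] by (simp add: norm_mult abs_le_iff)
  have "E' * (- (cmod x * cmod y)) \<le> E' * Re (x * cnj y)" using r assms(2) by (rule mult_left_mono)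
  hence r2: "- (E' * (cmod x * cmod y)) \<le> E' * Re (x * cnj y)" by simp
  have "E' * (cmod x * cmod y) \<le> (a * E) * (cmod x * cmod y)" using assms(3) by (intro mult_right_mono) auto
  hence r3: "h\<^sup>2 * (E' * (cmod x * cmod y)) \<le> h\<^sup>2 * ((a * E) * (cmod x * cmod y))" by (intro mult_left_mono) auto
  have am: "2 * ((h * cmod x) * (al * cmod y)) \<le> (h * cmod x)\<^sup>2 + (al * cmod y)\<^sup>2"
    using sum_squares_bound[of "h * cmod x" "al * cmod y"] by (simp add: power2_eq_square)
  have "h\<^sup>2 * ((a * E) * (cmod x * cmod y)) = E * ((h * cmod x) * (al * cmod y))"
    using assms(4) by (simp add: power2_eq_square algebra_simps)
  also have "\<dots> \<le> E * (((h * cmod x)\<^sup>2 + (al * cmod y)\<^sup>2) / 2)" using am assms(1) by (intro mult_left_mono) auto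
  finally have r4: "h\<^sup>2 * ((a * E) * (cmod x * cmod y)) \<le> E * (((h * cmod x)\<^sup>2 + (al * cmod y)\<^sup>2) / 2)" .
  have r5: "h\<^sup>2 * (E' * Re (x * cnj y)) \<ge> - (h\<^sup>2 * (E' * (cmod x * cmod y)))"
    using mult_left_mono[OF r2, of "h\<^sup>2"] by simp
  have e: "E * (((h * cmod x)\<^sup>2 + (al * cmod y)\<^sup>2) / 2) = (h\<^sup>2/2) * (E * (cmod x)\<^sup>2) + (al\<^sup>2/2) * (E * (cmod y)\<^sup>2)"
    by (simp add: power_mult_distrib algebra_simps)
  show ?thesis using r3 r4 r5 e by linarith
qed

lemma main_eps:
  fixes h lam e :: real and \<psi> gx gy :: "real \<times> real \<Rightarrow> complex"
  assumes h: "0 < h" and e: "0 < e" and eig: "gui_eigenpair h lam \<psi> gx gy"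
    and lam: "7/64 \<le> lam" "lam \<le> 9/64"
  shows "integral\<^sup>L MO (\<lambda>z. Ew (1/(8*h)) e (fst z) * indicator PP z * ((cmod (\<psi> z))\<^sup>2 + (cmod (of_real h * gx z))\<^sup>2))
     \<le> 4 * integral\<^sup>L MO (\<lambda>z. (cmod (\<psi> z))\<^sup>2)"
proof -
  define a where "a = 1/(8*h)"
  have a: "0 < a" using h by (simp add: a_def)
  have ha: "h * a = 1/8" using h by (simp add: a_def)
  interpret weight "Ew a e" "Ewd a e" "(1 + a) * exp (a / e)" by (rule Ew_weight[OF a e])
  interpret pweight "Ew a e" "(1 + a) * exp (a / e)" by (rule Ew_pweight[OF a e])
  have H: "H1Mix \<psi> gx gy" using eig by (simp add: gui_eigenpair_def)
  have L: "L2 \<psi>" "L2 gx" "L2 gy" using H unfolding H1Mix_def H1on_def L2on_iff by auto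
  have HW: "H1Mix (W \<psi>) (Gx \<psi> gx) (W gy)" by (rule H1Mix_W[OF H])
  have eq: "integral\<^sup>L MO (\<lambda>z. of_real (h\<^sup>2) * gx z * cnj (Gx \<psi> gx z) + gy z * cnj (W gy z))
      = of_real lam * integral\<^sup>L MO (\<lambda>z. \<psi> z * cnj (W \<psi> z))"
    using eig HW unfolding gui_eigenpair_def integral_MO by blast
  have i1: "integrable MO (\<lambda>z. of_real (h\<^sup>2) * gx z * cnj (Gx \<psi> gx z) + gy z * cnj (W gy z))"
    by (intro Bochner_Integration.integrable_add L2_prod L2_cmult L2_cnj L2_Gx L2_W L)
  have i2: "integrable MO (\<lambda>z. \<psi> z * cnj (W \<psi> z))"
    by (intro L2_prod L2_cnj L2_W L)
  define E where "E z = Ew a e (fst z)" for z :: "real \<times> real"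
  define E' where "E' z = Ewd a e (fst z)" for z :: "real \<times> real"
  have Enn: "0 \<le> E z" "0 \<le> E' z" "E' z \<le> a * E z" for z
    using Ew_bd[OF a e, of "fst z"] by (auto simp: E_def E'_def)
  define R where "R z = Re (of_real (h\<^sup>2) * gx z * cnj (Gx \<psi> gx z) + gy z * cnj (W gy z))" for z
  have Req: "R z = h\<^sup>2 * (E z * (cmod (gx z))\<^sup>2) + h\<^sup>2 * (E' z * Re (gx z * cnj (\<psi> z))) + E z * (cmod (gy z))\<^sup>2" for z
    unfolding R_def Gx_def W_def E_def E'_def cmod_power2
    by (simp add: algebra_simps power2_eq_square)
  have Rpsi: "Re (\<psi> z * cnj (W \<psi> z)) = E z * (cmod (\<psi> z))\<^sup>2" for z
    unfolding W_def E_def cmod_power2 by (simp add: algebra_simps power2_eq_square)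
  have ReEq: "integral\<^sup>L MO R = lam * integral\<^sup>L MO (\<lambda>z. E z * (cmod (\<psi> z))\<^sup>2)"
  proof -
    have "integral\<^sup>L MO R = Re (integral\<^sup>L MO (\<lambda>z. of_real (h\<^sup>2) * gx z * cnj (Gx \<psi> gx z) + gy z * cnj (W gy z)))"
      unfolding R_def by (rule integral_Re[OF i1])
    also have "\<dots> = lam * Re (integral\<^sup>L MO (\<lambda>z. \<psi> z * cnj (W \<psi> z)))" unfolding eq by simp
    also have "Re (integral\<^sup>L MO (\<lambda>z. \<psi> z * cnj (W \<psi> z))) = integral\<^sup>L MO (\<lambda>z. Re (\<psi> z * cnj (W \<psi> z)))"
      by (rule integral_Re[OF i2, symmetric])
    finally show ?thesis unfolding Rpsi .
  qed
  have mE0: "E \<in> borel_measurable MO" unfolding E_def by (rule mE)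
  have bE0: "\<bar>E z\<bar> \<le> (1 + a) * exp (a / e)" for z unfolding E_def by (rule bE)
  have iE: "integrable MO (\<lambda>z. E z * (cmod (f z))\<^sup>2)" if "L2 f" for f by (rule int_wt[OF that mE0 bE0])
  have iR: "integrable MO R" unfolding R_def using i1 by (rule integrable_Re)
  define S where "S = integral\<^sup>L MO (\<lambda>z. E z * (cmod (\<psi> z))\<^sup>2)"
  define T1 where "T1 = integral\<^sup>L MO (\<lambda>z. E z * (cmod (gx z))\<^sup>2)"
  define T2 where "T2 = integral\<^sup>L MO (\<lambda>z. E z * (cmod (gy z))\<^sup>2)"
  have main1: "(h\<^sup>2/2) * T1 + T2 \<le> (lam + 1/128) * S"
  proof -
    have "integral\<^sup>L MO (\<lambda>z. (h\<^sup>2/2) * (E z * (cmod (gx z))\<^sup>2) + E z * (cmod (gy z))\<^sup>2)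
        \<le> integral\<^sup>L MO (\<lambda>z. R z + (1/128) * (E z * (cmod (\<psi> z))\<^sup>2))"
    proof (rule integral_mono)
      show "integrable MO (\<lambda>z. (h\<^sup>2/2) * (E z * (cmod (gx z))\<^sup>2) + E z * (cmod (gy z))\<^sup>2)"
        using iE[OF L(2)] iE[OF L(3)] by auto
      show "integrable MO (\<lambda>z. R z + (1/128) * (E z * (cmod (\<psi> z))\<^sup>2))"
        using iR iE[OF L(1)] by auto
      fix z
      have "(h\<^sup>2/2) * (E z * (cmod (gx z))\<^sup>2) \<le> h\<^sup>2 * (E z * (cmod (gx z))\<^sup>2) + h\<^sup>2 * (E' z * Re (gx z * cnj (\<psi> z))) + ((1/8)\<^sup>2/2) * (E z * (cmod (\<psi> z))\<^sup>2)"
        by (rule Re_bound[OF Enn(1) Enn(2) Enn(3) ha h])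
      thus "(h\<^sup>2/2) * (E z * (cmod (gx z))\<^sup>2) + E z * (cmod (gy z))\<^sup>2 \<le> R z + (1/128) * (E z * (cmod (\<psi> z))\<^sup>2)"
        unfolding Req by (simp add: power2_eq_square)
    qed
    also have "\<dots> = integral\<^sup>L MO R + (1/128) * S"
      unfolding S_def using iR iE[OF L(1)] by simp
    also have "\<dots> = (lam + 1/128) * S" unfolding ReEq S_def by (simp add: algebra_simps)
    finally show ?thesis unfolding T1_def T2_def using iE[OF L(2)] iE[OF L(3)] by simp
  qed
  define SP where "SP = integral\<^sup>L MO (\<lambda>z. wp z * (cmod (\<psi> z))\<^sup>2)"
  define GP where "GP = integral\<^sup>L MO (\<lambda>z. wp z * (cmod (gx z))\<^sup>2)"
  define YP where "YP = integral\<^sup>L MO (\<lambda>z. wp z * (cmod (gy z))\<^sup>2)"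
  define N where "N = integral\<^sup>L MO (\<lambda>z. (cmod (\<psi> z))\<^sup>2)"
  have wpE: "wp z \<le> E z" for z unfolding wp_def E_def using w0[of "fst z"] by (auto simp: indicator_def)
  have PS: "SP \<le> (121/25) * YP" unfolding SP_def YP_def by (rule poinc_psi[OF H])
  have YT: "YP \<le> T2" unfolding YP_def T2_def
    using int_wp[OF L(3)] iE[OF L(3)] wpE by (intro integral_mono) (auto intro: mult_right_mono)
  have GT: "GP \<le> T1" unfolding GP_def T1_def
    using int_wp[OF L(2)] iE[OF L(2)] wpE by (intro integral_mono) (auto intro: mult_right_mono)
  have T10: "0 \<le> T1" unfolding T1_def using Enn(1) by (intro Bochner_Integration.integral_nonneg_AE AE_I2) auto
  have SP0: "0 \<le> SP" unfolding SP_def using wp_bd(2) by (intro Bochner_Integration.integral_nonneg_AE AE_I2) auto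
  have GP0: "0 \<le> GP" unfolding GP_def using wp_bd(2) by (intro Bochner_Integration.integral_nonneg_AE AE_I2) auto
  have Ddef: "S - SP = integral\<^sup>L MO (\<lambda>z. E z * (cmod (\<psi> z))\<^sup>2 - wp z * (cmod (\<psi> z))\<^sup>2)"
    unfolding S_def SP_def using iE[OF L(1)] int_wp[OF L(1)] by simp
  have D0: "0 \<le> S - SP" unfolding Ddef using wpE
    by (intro Bochner_Integration.integral_nonneg_AE AE_I2) (auto intro: mult_right_mono)
  have DN: "S - SP \<le> N" unfolding Ddef N_def
  proof (rule integral_mono)
    show "integrable MO (\<lambda>z. E z * (cmod (\<psi> z))\<^sup>2 - wp z * (cmod (\<psi> z))\<^sup>2)"
      using iE[OF L(1)] int_wp[OF L(1)] by auto
    show "integrable MO (\<lambda>z. (cmod (\<psi> z))\<^sup>2)" using L(1) by (simp add: L2_def)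
    fix z assume "z \<in> space MO"
    hence zO: "z \<in> OmegaGui" by simp
    have "E z - wp z \<le> 1"
    proof (cases "z \<in> PP")
      case True thus ?thesis using Enn(1)[of z] wpE[of z] by (simp add: wp_def E_def)
    next
      case False
      hence "fst z < 0" using zO by (auto simp: PP_def)
      hence "E z \<le> 1" unfolding E_def by (intro Ew_neg a) simp
      thus ?thesis using False by (simp add: wp_def)
    qed
    hence "(E z - wp z) * (cmod (\<psi> z))\<^sup>2 \<le> 1 * (cmod (\<psi> z))\<^sup>2" by (intro mult_right_mono) auto
    thus "E z * (cmod (\<psi> z))\<^sup>2 - wp z * (cmod (\<psi> z))\<^sup>2 \<le> (cmod (\<psi> z))\<^sup>2" by (simp add: algebra_simps)
  qed
  define \<beta> where "\<beta> = lam + 1/128"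
  have b0: "0 \<le> \<beta>" "\<beta> \<le> 19/128" using lam by (auto simp: \<beta>_def)
  have SS: "S = SP + (S - SP)" by simp
  have h2: "0 < h\<^sup>2" using h by simp
  have c1: "SP \<le> (121/25) * (\<beta> * (SP + (S - SP)))"
  proof -
    have "0 \<le> (h\<^sup>2/2) * T1" using T10 h2 by simp
    hence "T2 \<le> \<beta> * S" using main1 unfolding \<beta>_def by linarith
    thus ?thesis using PS YT by simp
  qed
  have c2: "h\<^sup>2 * GP \<le> 2 * (\<beta> * (SP + (S - SP)))"
  proof -
    have T20: "0 \<le> T2" unfolding T2_def using Enn(1) by (intro Bochner_Integration.integral_nonneg_AE AE_I2) auto
    have "h\<^sup>2 * GP \<le> h\<^sup>2 * T1" using GT h2 by simp
    moreover have "(h\<^sup>2/2) * T1 \<le> \<beta> * S" using main1 T20 unfolding \<beta>_def by linarith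
    ultimately show ?thesis by simp
  qed
  have fin: "SP + h\<^sup>2 * GP \<le> 4 * N"
    by (rule final_arith[OF b0 SP0 D0 DN c1 c2])
  have "integral\<^sup>L MO (\<lambda>z. Ew a e (fst z) * indicator PP z * ((cmod (\<psi> z))\<^sup>2 + (cmod (of_real h * gx z))\<^sup>2))
      = integral\<^sup>L MO (\<lambda>z. wp z * (cmod (\<psi> z))\<^sup>2 + h\<^sup>2 * (wp z * (cmod (gx z))\<^sup>2))"
    by (rule Bochner_Integration.integral_cong) (auto simp: wp_def norm_mult power_mult_distrib algebra_simps)
  also have "\<dots> = SP + h\<^sup>2 * GP"
    unfolding SP_def GP_def using int_wp[OF L(1)] int_wp[OF L(2)] by simp
  finally show ?thesis using fin unfolding N_def a_def by simp
qed

lemma PP_eq: "OmegaGui \<inter> {z. fst z \<ge> 0} = PP" by (simp add: PP_def)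

lemma to_MO_PP:
  "(\<integral>\<^sup>+ z. f z * indicator PP z \<partial>lborel) = (\<integral>\<^sup>+ z. f z * indicator PP z \<partial>MO)"
proof -
  have "(\<integral>\<^sup>+ z. f z * indicator PP z \<partial>MO) = (\<integral>\<^sup>+ z. f z * indicator PP z * indicator OmegaGui z \<partial>lborel)"
    by (rule nn_integral_MO)
  also have "\<dots> = (\<integral>\<^sup>+ z. f z * indicator PP z \<partial>lborel)"
    using PP_sub by (intro nn_integral_cong) (auto simp: indicator_def)
  finally show ?thesis by simp
qed

lemma inv_lim: "(\<lambda>n. 1 / (real n + 1)) \<longlonglongrightarrow> (0::real)"
  using LIMSEQ_inverse_real_of_nat by (simp add: inverse_eq_divide add.commute)

lemma main_fixed:
  fixes h lam :: real and \<psi> gx gy :: "real \<times> real \<Rightarrow> complex"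
  assumes h: "0 < h" and eig: "gui_eigenpair h lam \<psi> gx gy"
    and lam: "7/64 \<le> lam" "lam \<le> 9/64"
  shows "(\<integral>\<^sup>+ z \<in> OmegaGui \<inter> {z. fst z \<ge> 0}.
         ennreal (exp ((1/8) / h * fst z) * ((cmod (\<psi> z))\<^sup>2 + (cmod (of_real h * gx z))\<^sup>2)) \<partial>lborel)
       \<le> ennreal (4 * (LINT z:OmegaGui|lborel. (cmod (\<psi> z))\<^sup>2))"
proof -
  define a where "a = 1/(8*h)"
  have a: "0 < a" using h by (simp add: a_def)
  have H: "H1Mix \<psi> gx gy" using eig by (simp add: gui_eigenpair_def)
  have L: "L2 \<psi>" "L2 gx" using H unfolding H1Mix_def H1on_def L2on_iff by auto
  define Q where "Q z = (cmod (\<psi> z))\<^sup>2 + (cmod (of_real h * gx z))\<^sup>2" for z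
  have Q0: "0 \<le> Q z" for z by (simp add: Q_def)
  have mQ: "Q \<in> borel_measurable MO"
  proof -
    have "(\<lambda>z. of_real h * gx z) \<in> borel_measurable MO" using L2_meas[OF L2_cmult[OF L(2)]] .
    hence "(\<lambda>z. (cmod (of_real h * gx z))\<^sup>2) \<in> borel_measurable MO" by simp
    moreover have "(\<lambda>z. (cmod (\<psi> z))\<^sup>2) \<in> borel_measurable MO" using L2_meas[OF L(1)] by simp
    ultimately show ?thesis unfolding Q_def[abs_def] by (intro borel_measurable_add)
  qed
  define u where "u n z = ennreal (Ew a (1 / (real n + 1)) (fst z) * Q z) * indicator PP z" for n z
  define f where "f z = ennreal (exp ((1/8) / h * fst z) * Q z) * indicator PP z" for z
  define N where "N = integral\<^sup>L MO (\<lambda>z. (cmod (\<psi> z))\<^sup>2)"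
  have bound: "integral\<^sup>N MO (u n) \<le> ennreal (4 * N)" for n
  proof -
    define e where "e = 1 / (real n + 1)"
    have e: "0 < e" by (simp add: e_def)
    interpret pweight "Ew a e" "(1 + a) * exp (a / e)" by (rule Ew_pweight[OF a e])
    have iG: "integrable MO (\<lambda>z. wp z * (cmod (\<psi> z))\<^sup>2 + wp z * (cmod (of_real h * gx z))\<^sup>2)"
      using int_wp[OF L(1)] int_wp[OF L2_cmult[OF L(2)]] by auto
    have ieq: "(\<lambda>z. Ew a e (fst z) * indicator PP z * Q z) = (\<lambda>z. wp z * (cmod (\<psi> z))\<^sup>2 + wp z * (cmod (of_real h * gx z))\<^sup>2)"
      by (rule ext) (simp add: wp_def Q_def algebra_simps)
    have iQ: "integrable MO (\<lambda>z. Ew a e (fst z) * indicator PP z * Q z)" unfolding ieq by (rule iG)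
    have "integral\<^sup>N MO (u n) = (\<integral>\<^sup>+ z. ennreal (Ew a e (fst z) * indicator PP z * Q z) \<partial>MO)"
      unfolding u_def e_def[symmetric] by (intro nn_integral_cong) (auto simp: indicator_def)
    also have "\<dots> = ennreal (integral\<^sup>L MO (\<lambda>z. Ew a e (fst z) * indicator PP z * Q z))"
      by (rule nn_integral_eq_integral[OF iQ]) (auto intro!: AE_I2 mult_nonneg_nonneg Q0 simp: Ew_def)
    also have "\<dots> \<le> ennreal (4 * N)"
    proof (rule ennreal_leI)
      have "integral\<^sup>L MO (\<lambda>z. Ew a e (fst z) * indicator PP z * Q z) \<le> 4 * N"
        using main_eps[OF h e eig lam] unfolding a_def Q_def N_def by simp
      thus "integral\<^sup>L MO (\<lambda>z. Ew a e (fst z) * indicator PP z * Q z) \<le> 4 * N" .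
    qed
    finally show ?thesis .
  qed
  have mu: "u n \<in> borel_measurable MO" for n
  proof -
    have c: "(\<lambda>z. Ew a (1 / (real n + 1)) (fst z)) \<in> borel_measurable MO"
      by (rule meas_MO_cont) (intro continuous_on_compose2[OF Ew_pweight[OF a, THEN pweight.cw]] continuous_intros, auto)
    have "(\<lambda>z. Ew a (1 / (real n + 1)) (fst z) * Q z) \<in> borel_measurable MO" using c mQ by (rule borel_measurable_times)
    hence "(\<lambda>z. ennreal (Ew a (1 / (real n + 1)) (fst z) * Q z)) \<in> borel_measurable MO" by simp
    moreover have "(\<lambda>z. indicator PP z :: ennreal) \<in> borel_measurable MO"
      unfolding MO_def by (rule measurable_restrict_space1) simp
    ultimately show ?thesis unfolding u_def[abs_def] by (rule borel_measurable_times_ennreal)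
  qed
  have lim: "(\<lambda>n. u n z) \<longlonglongrightarrow> f z" for z
  proof -
    have "(\<lambda>n. fst z / sqrt (1 + (1 / (real n + 1) * fst z)\<^sup>2)) \<longlonglongrightarrow> fst z / sqrt (1 + (0 * fst z)\<^sup>2)"
      by (intro tendsto_intros inv_lim) (simp add: add_pos_nonneg)
    hence "(\<lambda>n. sfun (1 / (real n + 1)) (fst z)) \<longlonglongrightarrow> fst z" by (simp add: sfun_def)
    hence "(\<lambda>n. Ew a (1 / (real n + 1)) (fst z) * Q z) \<longlonglongrightarrow> exp (a * fst z) * Q z"
      unfolding Ew_def by (intro tendsto_intros)
    hence r: "(\<lambda>n. ennreal (Ew a (1 / (real n + 1)) (fst z) * Q z)) \<longlonglongrightarrow> ennreal (exp (a * fst z) * Q z)"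
      by (rule tendsto_ennrealI)
    have aa: "a * fst z = (1/8) / h * fst z" by (simp add: a_def)
    show ?thesis
    proof (cases "z \<in> PP")
      case True thus ?thesis using r unfolding u_def f_def aa by simp
    next
      case False thus ?thesis unfolding u_def f_def by simp
    qed
  qed
  have "(\<integral>\<^sup>+ z. f z \<partial>MO) = (\<integral>\<^sup>+ z. liminf (\<lambda>n. u n z) \<partial>MO)"
  proof (intro nn_integral_cong)
    fix z show "f z = liminf (\<lambda>n. u n z)"
      by (rule lim_imp_Liminf[OF _ lim, symmetric]) simp
  qed
  also have "\<dots> \<le> liminf (\<lambda>n. integral\<^sup>N MO (u n))" by (rule nn_integral_liminf[OF mu])
  also have "\<dots> \<le> liminf (\<lambda>n. ennreal (4 * N))" by (rule Liminf_mono) (use bound in simp)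
  also have "\<dots> = ennreal (4 * N)" by (simp add: Liminf_const)
  finally have "(\<integral>\<^sup>+ z. f z \<partial>MO) \<le> ennreal (4 * N)" .
  moreover have "(\<integral>\<^sup>+ z. f z \<partial>MO) = (\<integral>\<^sup>+ z \<in> OmegaGui \<inter> {z. fst z \<ge> 0}.
         ennreal (exp ((1/8) / h * fst z) * ((cmod (\<psi> z))\<^sup>2 + (cmod (of_real h * gx z))\<^sup>2)) \<partial>lborel)"
    unfolding PP_eq f_def Q_def by (rule to_MO_PP[symmetric])
  ultimately show ?thesis unfolding N_def integral_MO by simp
qed

theorem proposition6p5:
  fixes \<Gamma> :: real
  assumes "\<Gamma> > 0"
  shows "\<exists>\<alpha>>0. \<exists>h0>0. \<exists>C>0. \<forall>h lam \<psi> gx gy.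
     0 < h \<and> h < h0 \<and> gui_eigenpair h lam \<psi> gx gy \<and> \<bar>lam - 1/8\<bar> \<le> \<Gamma> * h powr (2/3) \<longrightarrow>
     (\<integral>\<^sup>+ z \<in> OmegaGui \<inter> {z. fst z \<ge> 0}.
         ennreal (exp (\<alpha> / h * fst z) * ((cmod (\<psi> z))\<^sup>2 + (cmod (of_real h * gx z))\<^sup>2)) \<partial>lborel)
       \<le> ennreal (C * (LINT z:OmegaGui|lborel. (cmod (\<psi> z))\<^sup>2))"
proof -
  define h0 where "h0 = (1/(64*\<Gamma>)) powr (3/2)"
  have h0p: "0 < h0" using assms by (simp add: h0_def)
  have key: "\<forall>h lam \<psi> gx gy.
     0 < h \<and> h < h0 \<and> gui_eigenpair h lam \<psi> gx gy \<and> \<bar>lam - 1/8\<bar> \<le> \<Gamma> * h powr (2/3) \<longrightarrow>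
     (\<integral>\<^sup>+ z \<in> OmegaGui \<inter> {z. fst z \<ge> 0}.
         ennreal (exp ((1/8) / h * fst z) * ((cmod (\<psi> z))\<^sup>2 + (cmod (of_real h * gx z))\<^sup>2)) \<partial>lborel)
       \<le> ennreal (4 * (LINT z:OmegaGui|lborel. (cmod (\<psi> z))\<^sup>2))"
  proof (intro allI impI)
    fix h lam \<psi> gx gy
    assume A: "0 < h \<and> h < h0 \<and> gui_eigenpair h lam \<psi> gx gy \<and> \<bar>lam - 1/8\<bar> \<le> \<Gamma> * h powr (2/3)"
    hence h: "0 < h" and eig: "gui_eigenpair h lam \<psi> gx gy" by auto
    have "h powr (2/3) < h0 powr (2/3)"
      using A by (intro powr_less_mono2) auto
    also have "\<dots> = 1/(64*\<Gamma>)" using assms by (simp add: h0_def powr_powr)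
    finally have hh: "h powr (2/3) < 1/(64*\<Gamma>)" .
    have "\<Gamma> * h powr (2/3) < \<Gamma> * (1/(64*\<Gamma>))" by (rule mult_strict_left_mono[OF hh assms])
    also have "\<dots> = 1/64" using assms by simp
    finally have "\<bar>lam - 1/8\<bar> < 1/64" using A by linarith
    hence "lam - 1/8 < 1/64" "-(lam - 1/8) < 1/64" by (simp_all only: abs_less_iff)
    hence lam: "7/64 \<le> lam" "lam \<le> 9/64" by linarith+
    show "(\<integral>\<^sup>+ z \<in> OmegaGui \<inter> {z. fst z \<ge> 0}.
         ennreal (exp ((1/8) / h * fst z) * ((cmod (\<psi> z))\<^sup>2 + (cmod (of_real h * gx z))\<^sup>2)) \<partial>lborel)
       \<le> ennreal (4 * (LINT z:OmegaGui|lborel. (cmod (\<psi> z))\<^sup>2))"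
      by (rule main_fixed[OF h eig lam])
  qed
  have p1: "(0::real) < 1/8" and p2: "(0::real) < 4" by simp_all
  show ?thesis using p1 p2 h0p key by blast
qed

end
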